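(* Let $G$ be an abelian group and let $V$ be a finite-dimensional unipotent representation of $G$ over a field $\Bbbk$ of characteristic $0$. Then for every finite-index subgroup $G'<G$, the inclusion $G'\hookrightarrow G$ induces isomorphisms $\mathrm H_k(G';V)\cong\mathrm H_k(G;V)$ for all $k\ge0$.
   Context: A linear operator is unipotent if it is $\mathrm{id}+\phi$ with $\phi$ nilpotent; a representation is unipotent if every group element acts by a unipotent operator. *)

theory Defs
  imports "HOL-Algebra.Coset" "HOL.Vector_Spaces"
begin

text \<open>Bar complex for group homology H_k(G;V) of a group G (HOL-Algebra) with
 coefficients in a left representation rho on a vector space of type 'v.\<close>

definition hchain :: "'g set \<Rightarrow> nat \<Rightarrow> ('g list \<Rightarrow> 'v::ab_group_add) \<Rightarrow> bool" where
  "hchain S k c \<longleftrightarrow> finite {\<sigma>. c \<sigma> \<noteq> 0} \<and>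
     (\<forall>\<sigma>. c \<sigma> \<noteq> 0 \<longrightarrow> length \<sigma> = k \<and> set \<sigma> \<subseteq> S)"

definition bar_face :: "('g, 'b) monoid_scheme \<Rightarrow> nat \<Rightarrow> 'g list \<Rightarrow> 'g list" where
  "bar_face G i \<sigma> =
     (if i = 0 then tl \<sigma>
      else if i < length \<sigma> then take (i - 1) \<sigma> @ [\<sigma> ! (i - 1) \<otimes>\<^bsub>G\<^esub> \<sigma> ! i] @ drop (i + 1) \<sigma>
      else butlast \<sigma>)"

text \<open>Boundary C_k \<rightarrow> C_(k-1):
  d(v \<otimes> [g1|..|gk]) = g1\<inverse>v \<otimes> [g2|..|gk] + \<Sum>_{0<i<k} (-1)^i v \<otimes> [..|g_i g_(i+1)|..]
    + (-1)^k v \<otimes> [g1|..|g_(k-1)], and d = 0 on C_0.\<close>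
definition bar_bd :: "('g, 'b) monoid_scheme \<Rightarrow> ('g \<Rightarrow> 'v \<Rightarrow> 'v) \<Rightarrow> nat
                      \<Rightarrow> ('g list \<Rightarrow> 'v::ab_group_add) \<Rightarrow> ('g list \<Rightarrow> 'v)" where
  "bar_bd G \<rho> k c =
     (if k = 0 then (\<lambda>_. 0) else
      (\<lambda>\<tau>. \<Sum>\<sigma>\<in>{\<sigma>. c \<sigma> \<noteq> 0}. \<Sum>i\<in>{0..k}.
          if bar_face G i \<sigma> = \<tau> then
            (let x = (if i = 0 then \<rho> (inv\<^bsub>G\<^esub> (\<sigma> ! 0)) (c \<sigma>) else c \<sigma>)
             in if even i then x else - x)
          else 0))"

definition hcycle :: "('g, 'b) monoid_scheme \<Rightarrow> ('g \<Rightarrow> 'v \<Rightarrow> 'v) \<Rightarrow> 'g set \<Rightarrow> nat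
                      \<Rightarrow> ('g list \<Rightarrow> 'v::ab_group_add) \<Rightarrow> bool" where
  "hcycle G \<rho> S k c \<longleftrightarrow> hchain S k c \<and> bar_bd G \<rho> k c = (\<lambda>_. 0)"

definition hboundary :: "('g, 'b) monoid_scheme \<Rightarrow> ('g \<Rightarrow> 'v \<Rightarrow> 'v) \<Rightarrow> 'g set \<Rightarrow> nat
                      \<Rightarrow> ('g list \<Rightarrow> 'v::ab_group_add) \<Rightarrow> bool" where
  "hboundary G \<rho> S k c \<longleftrightarrow> (\<exists>d. hchain S (Suc k) d \<and> bar_bd G \<rho> (Suc k) d = c)"

text \<open>The map H_k(H;V) \<rightarrow> H_k(G;V) induced by the inclusion of the subgroup H
  (on chains: the identity, viewing H-tuples as G-tuples) is bijective,
  i.e. surjective and injective on cycles modulo boundaries.\<close>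
definition inclusion_induces_iso_Hk ::
  "('g, 'b) monoid_scheme \<Rightarrow> ('g \<Rightarrow> 'v \<Rightarrow> 'v) \<Rightarrow> 'g set \<Rightarrow> nat \<Rightarrow> 'v::ab_group_add itself \<Rightarrow> bool" where
  "inclusion_induces_iso_Hk G \<rho> H k _ \<longleftrightarrow>
     (\<forall>z::'g list \<Rightarrow> 'v. hcycle G \<rho> (carrier G) k z \<longrightarrow>
        (\<exists>z'. hcycle G \<rho> H k z' \<and> hboundary G \<rho> (carrier G) k (z' - z))) \<and>
     (\<forall>z'::'g list \<Rightarrow> 'v. hcycle G \<rho> H k z' \<and> hboundary G \<rho> (carrier G) k z'
        \<longrightarrow> hboundary G \<rho> H k z')"

end

theory Submission
  imports Defs "HOL-Library.Function_Algebras"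
begin



section \<open>Generic finitely supported chains\<close>

definition supp :: "('x \<Rightarrow> 'v::zero) \<Rightarrow> 'x set" where "supp c = {\<sigma>. c \<sigma> \<noteq> 0}"
definition fs :: "('x \<Rightarrow> 'v::zero) \<Rightarrow> bool" where "fs c \<longleftrightarrow> finite (supp c)"
definition single :: "'x \<Rightarrow> 'v::zero \<Rightarrow> 'x \<Rightarrow> 'v" where
  "single \<sigma> v = (\<lambda>\<tau>. if \<tau> = \<sigma> then v else 0)"
definition lin :: "(('x \<Rightarrow> 'v::ab_group_add) \<Rightarrow> ('y \<Rightarrow> 'w::ab_group_add)) \<Rightarrow> bool" where
  "lin L \<longleftrightarrow> L 0 = 0 \<and> (\<forall>a b. fs a \<longrightarrow> fs b \<longrightarrow> L (a + b) = L a + L b) \<and> (\<forall>a. fs a \<longrightarrow> fs (L a))"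
definition onP :: "('x \<Rightarrow> bool) \<Rightarrow> ('x \<Rightarrow> 'v::zero) \<Rightarrow> bool" where
  "onP P c \<longleftrightarrow> (\<forall>\<sigma>. c \<sigma> \<noteq> 0 \<longrightarrow> P \<sigma>)"
definition ext :: "('x \<Rightarrow> 'v::zero \<Rightarrow> 'y \<Rightarrow> 'w::comm_monoid_add) \<Rightarrow> ('x \<Rightarrow> 'v) \<Rightarrow> 'y \<Rightarrow> 'w" where
  "ext F c = (\<Sum>\<sigma>\<in>supp c. F \<sigma> (c \<sigma>))"
definition addF :: "('x \<Rightarrow> 'v::ab_group_add \<Rightarrow> 'y \<Rightarrow> 'w::ab_group_add) \<Rightarrow> bool" where
  "addF F \<longleftrightarrow> (\<forall>\<sigma> a b. F \<sigma> (a + b) = F \<sigma> a + F \<sigma> b) \<and> (\<forall>\<sigma> v. fs (F \<sigma> v))"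

lemma sum_apply: "(\<Sum>a\<in>A. f a) x = (\<Sum>a\<in>A. f a x)"
  by (induction A rule: infinite_finite_induct) auto

lemma fs_zero[simp]: "fs (0::'x\<Rightarrow>'v::ab_group_add)" by (simp add: fs_def supp_def)
lemma fs_add[simp]: "fs (a::'x\<Rightarrow>'v::ab_group_add) \<Longrightarrow> fs b \<Longrightarrow> fs (a + b)"
  unfolding fs_def supp_def by (rule finite_subset[of _ "{\<sigma>. a \<sigma> \<noteq> 0} \<union> {\<sigma>. b \<sigma> \<noteq> 0}"]) auto
lemma fs_uminus[simp]: "fs (- a) = fs (a::'x\<Rightarrow>'v::ab_group_add)"
  unfolding fs_def supp_def by simp
lemma fs_diff[simp]: "fs (a::'x\<Rightarrow>'v::ab_group_add) \<Longrightarrow> fs b \<Longrightarrow> fs (a - b)"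
  using fs_add[of a "-b"] by simp
lemma fs_sum[simp]: "(\<And>i. i \<in> I \<Longrightarrow> fs (f i::'x\<Rightarrow>'v::ab_group_add)) \<Longrightarrow> fs (\<Sum>i\<in>I. f i)"
  by (induction I rule: infinite_finite_induct) auto
lemma fs_single[simp]: "fs (single \<sigma> v)"
  unfolding fs_def supp_def single_def by (rule finite_subset[of _ "{\<sigma>}"]) auto
lemma fs_comp: "fs c \<Longrightarrow> f 0 = 0 \<Longrightarrow> fs (\<lambda>\<sigma>. f (c \<sigma>))"
  unfolding fs_def supp_def by (rule finite_subset[of _ "{\<sigma>. c \<sigma> \<noteq> 0}"]) auto

lemma single_add: "single \<sigma> (a + b::'v::ab_group_add) = single \<sigma> a + single \<sigma> b"
  by (auto simp: single_def)
lemma single_zero[simp]: "single \<sigma> 0 = 0"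
  by (auto simp: single_def)
lemma single_uminus: "single \<sigma> (- a::'v::ab_group_add) = - single \<sigma> a"
  by (auto simp: single_def fun_eq_iff)
lemma single_diff: "single \<sigma> (a - b::'v::ab_group_add) = single \<sigma> a - single \<sigma> b"
  by (auto simp: single_def fun_eq_iff)
lemma single_sum: "single \<sigma> (\<Sum>i\<in>I. f i::'v::ab_group_add) = (\<Sum>i\<in>I. single \<sigma> (f i))"
  by (induction I rule: infinite_finite_induct) (auto simp: single_add)

lemma addF_zero: "addF F \<Longrightarrow> F \<sigma> 0 = 0"
  unfolding addF_def by (metis add_cancel_right_right add_0)

lemma ext_superset:
  assumes "addF F" "finite S" "supp c \<subseteq> S"
  shows "ext F c = (\<Sum>\<sigma>\<in>S. F \<sigma> (c \<sigma>))"
  unfolding ext_def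
  by (rule sum.mono_neutral_left) (use assms addF_zero[OF assms(1)] in \<open>auto simp: supp_def\<close>)

lemma ext_add:
  assumes "addF F" "fs a" "fs b"
  shows "ext F (a + b) = ext F a + ext F b"
proof -
  let ?S = "supp a \<union> supp b"
  have fin: "finite ?S" using assms by (auto simp: fs_def)
  have "ext F (a + b) = (\<Sum>\<sigma>\<in>?S. F \<sigma> ((a+b) \<sigma>))"
    by (rule ext_superset[OF assms(1) fin]) (auto simp: supp_def)
  also have "\<dots> = (\<Sum>\<sigma>\<in>?S. F \<sigma> (a \<sigma>)) + (\<Sum>\<sigma>\<in>?S. F \<sigma> (b \<sigma>))"
    using assms(1) by (simp add: addF_def sum.distrib)
  also have "\<dots> = ext F a + ext F b"
    using ext_superset[OF assms(1) fin, of a] ext_superset[OF assms(1) fin, of b] by auto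
  finally show ?thesis .
qed

lemma ext_zero[simp]: "ext F 0 = 0"
  by (simp add: ext_def supp_def)

lemma fs_ext: "addF F \<Longrightarrow> fs (ext F c)"
  unfolding ext_def addF_def by (auto intro!: fs_sum)

lemma lin_ext: "addF F \<Longrightarrow> lin (ext F)"
  unfolding lin_def using ext_add fs_ext by auto

lemma lin_zero: "lin L \<Longrightarrow> L 0 = 0" by (simp add: lin_def)
lemma lin_add: "lin L \<Longrightarrow> fs a \<Longrightarrow> fs b \<Longrightarrow> L (a + b) = L a + L b" by (simp add: lin_def)
lemma lin_fs: "lin L \<Longrightarrow> fs a \<Longrightarrow> fs (L a)" by (simp add: lin_def)
lemma lin_uminus: assumes "lin L" "fs a" shows "L (- a) = - L a"
proof -
  have "L (a + - a) = L a + L (- a)" using lin_add[OF assms(1) assms(2), of "-a"] assms(2) by simp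
  then have "L a + L (- a) = 0" using lin_zero[OF assms(1)] by simp
  then show ?thesis by (simp add: eq_neg_iff_add_eq_0 add.commute)
qed
lemma lin_diff: "lin L \<Longrightarrow> fs a \<Longrightarrow> fs b \<Longrightarrow> L (a - b) = L a - L b"
  using lin_add[of L a "-b"] lin_uminus[of L b] by simp
lemma lin_sum: "lin L \<Longrightarrow> (\<And>i. i \<in> I \<Longrightarrow> fs (f i)) \<Longrightarrow> L (\<Sum>i\<in>I. f i) = (\<Sum>i\<in>I. L (f i))"
  by (induction I rule: infinite_finite_induct) (auto simp: lin_zero lin_add)

lemma lin_comp: "lin L1 \<Longrightarrow> lin L2 \<Longrightarrow> lin (\<lambda>c. L1 (L2 c))"
  unfolding lin_def by auto
lemma lin_plus: "lin L1 \<Longrightarrow> lin L2 \<Longrightarrow> lin (\<lambda>c. L1 c + L2 c)"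
  unfolding lin_def by (auto simp: algebra_simps)
lemma lin_minus: "lin L1 \<Longrightarrow> lin L2 \<Longrightarrow> lin (\<lambda>c. L1 c - L2 c)"
  unfolding lin_def by (auto simp: algebra_simps)
lemma lin_sumL: "(\<And>t. t \<in> T \<Longrightarrow> lin (L t)) \<Longrightarrow> lin (\<lambda>c. \<Sum>t\<in>T. L t c)"
  by (induction T rule: infinite_finite_induct) (auto simp: lin_def sum.distrib)
lemma lin_id: "lin (\<lambda>c. c)" by (simp add: lin_def)
lemma lin_pointwise: "(\<And>a b. f (a + b) = f a + f b) \<Longrightarrow> lin (\<lambda>c \<sigma>. f (c \<sigma>))"
proof -
  assume a: "\<And>a b. f (a + b) = f a + f b"
  then have "f 0 = 0" by (metis add_cancel_right_right add_0)
  then show ?thesis using a unfolding lin_def by (auto simp: fs_comp fun_eq_iff zero_fun_def)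
qed

lemma decomp: "fs c \<Longrightarrow> c = (\<Sum>\<sigma>\<in>supp c. single \<sigma> (c \<sigma>))"
  unfolding fs_def
  by (rule ext) (auto simp: sum_apply single_def supp_def if_distrib sum.delta cong: if_cong)

lemma lin_decomp: "lin L \<Longrightarrow> fs c \<Longrightarrow> L c = (\<Sum>\<sigma>\<in>supp c. L (single \<sigma> (c \<sigma>)))"
  by (subst decomp, assumption) (simp add: lin_sum)

lemma lin_eqI:
  assumes "lin L1" "lin L2" "fs c" "\<And>\<sigma>. c \<sigma> \<noteq> 0 \<Longrightarrow> L1 (single \<sigma> (c \<sigma>)) = L2 (single \<sigma> (c \<sigma>))"
  shows "L1 c = L2 c"
  using lin_decomp[OF assms(1,3)] lin_decomp[OF assms(2,3)] assms(4) by (simp add: supp_def)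

lemma ext_single: "addF F \<Longrightarrow> ext F (single \<sigma> v) = F \<sigma> v"
proof (cases "v = 0")
  case True assume "addF F" then show ?thesis using True addF_zero by simp
next
  case False
  then have "supp (single \<sigma> v) = {\<sigma>}" by (auto simp: supp_def single_def)
  then show ?thesis by (simp add: ext_def single_def)
qed

lemma onP_zero[simp]: "onP P 0" by (simp add: onP_def)
lemma onP_add: "onP P a \<Longrightarrow> onP P b \<Longrightarrow> onP P (a + (b::'x\<Rightarrow>'v::ab_group_add))"
  unfolding onP_def plus_fun_apply by (metis add.right_neutral)
lemma onP_uminus: "onP P a \<Longrightarrow> onP P (- (a::'x\<Rightarrow>'v::ab_group_add))" by (auto simp: onP_def)
lemma onP_sum: "(\<And>i. i \<in> I \<Longrightarrow> onP P (f i)) \<Longrightarrow> onP P (\<Sum>i\<in>I. f i::'x\<Rightarrow>'v::ab_group_add)"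
  by (induction I rule: infinite_finite_induct) (auto intro!: onP_add)
lemma onP_single: "(v \<noteq> 0 \<Longrightarrow> P \<sigma>) \<Longrightarrow> onP P (single \<sigma> v)" by (auto simp: onP_def single_def)
lemma onP_lin:
  assumes "lin L" "fs c" "\<And>\<sigma>. c \<sigma> \<noteq> 0 \<Longrightarrow> onP P (L (single \<sigma> (c \<sigma>)))"
  shows "onP P (L c)"
  using lin_decomp[OF assms(1,2)] assms(3) by (auto intro!: onP_sum simp: supp_def)
lemma onP_mono: "onP P c \<Longrightarrow> (\<And>\<sigma>. P \<sigma> \<Longrightarrow> Q \<sigma>) \<Longrightarrow> onP Q c" by (auto simp: onP_def)




section \<open>Homogeneous chains and the prism homotopy\<close>

definition sg :: "nat \<Rightarrow> 'v::ab_group_add \<Rightarrow> 'v" where "sg i v = (if even i then v else - v)"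

lemma sg_add: "sg i (a + b) = sg i a + sg i b" by (simp add: sg_def)
lemma sg_zero[simp]: "sg i 0 = 0" by (simp add: sg_def)
lemma sg_Suc: "sg (Suc i) v = - sg i v" by (simp add: sg_def)
lemma sg_0[simp]: "sg 0 v = v" by (simp add: sg_def)

definition hgen :: "'g list \<Rightarrow> 'v::ab_group_add \<Rightarrow> 'g list \<Rightarrow> 'v" where
  "hgen x v = (\<Sum>i<length x. single (take i x @ drop (Suc i) x) (sg i v))"
definition hbd :: "('g list \<Rightarrow> 'v::ab_group_add) \<Rightarrow> 'g list \<Rightarrow> 'v" where
  "hbd = ext hgen"
definition prep :: "'g \<Rightarrow> ('g list \<Rightarrow> 'v::ab_group_add) \<Rightarrow> 'g list \<Rightarrow> 'v" where
  "prep a = ext (\<lambda>x v. single (a # x) v)"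
definition mapc :: "('g \<Rightarrow> 'g) \<Rightarrow> ('g list \<Rightarrow> 'v::ab_group_add) \<Rightarrow> 'g list \<Rightarrow> 'v" where
  "mapc \<alpha> = ext (\<lambda>x v. single (map \<alpha> x) v)"
definition pgen :: "('g \<Rightarrow> 'g) \<Rightarrow> 'g list \<Rightarrow> 'v::ab_group_add \<Rightarrow> 'g list \<Rightarrow> 'v" where
  "pgen \<alpha> x v = (\<Sum>i<length x. single (take (Suc i) (map \<alpha> x) @ drop i x) (sg i v))"
definition pD :: "('g \<Rightarrow> 'g) \<Rightarrow> ('g list \<Rightarrow> 'v::ab_group_add) \<Rightarrow> 'g list \<Rightarrow> 'v" where
  "pD \<alpha> = ext (pgen \<alpha>)"

lemma addF_hgen: "addF hgen"
  by (auto simp: addF_def hgen_def sg_add single_add sum.distrib)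
lemma addF_pgen: "addF (pgen \<alpha>)"
  by (auto simp: addF_def pgen_def sg_add single_add sum.distrib)
lemma addF_single: "addF (\<lambda>x v. single (f x) v)"
  by (auto simp: addF_def single_add)

lemma lin_hbd: "lin hbd" by (simp add: hbd_def lin_ext addF_hgen)
lemma lin_prep: "lin (prep a)" by (simp add: prep_def lin_ext addF_single)
lemma lin_mapc: "lin (mapc \<alpha>)" by (simp add: mapc_def lin_ext addF_single)
lemma lin_pD: "lin (pD \<alpha>)" by (simp add: pD_def lin_ext addF_pgen)

lemma hbd_single: "hbd (single x v) = hgen x v" by (simp add: hbd_def ext_single addF_hgen)
lemma prep_single: "prep a (single x v) = single (a # x) v" by (simp add: prep_def ext_single addF_single)
lemma mapc_single: "mapc \<alpha> (single x v) = single (map \<alpha> x) v" by (simp add: mapc_def ext_single addF_single)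
lemma pD_single: "pD \<alpha> (single x v) = pgen \<alpha> x v" by (simp add: pD_def ext_single addF_pgen)

lemma hgen_Nil[simp]: "hgen [] v = 0" by (simp add: hgen_def)
lemma pgen_Nil[simp]: "pgen \<alpha> [] v = 0" by (simp add: pgen_def)

lemma fs_hbd[simp]: "fs c \<Longrightarrow> fs (hbd c)" by (rule lin_fs[OF lin_hbd])
lemma fs_prep[simp]: "fs c \<Longrightarrow> fs (prep a c)" by (rule lin_fs[OF lin_prep])
lemma fs_mapc[simp]: "fs c \<Longrightarrow> fs (mapc \<alpha> c)" by (rule lin_fs[OF lin_mapc])
lemma fs_pD[simp]: "fs c \<Longrightarrow> fs (pD \<alpha> c)" by (rule lin_fs[OF lin_pD])

lemma hgen_Cons: "hgen (a # x) v = single x v - prep a (hgen x v)"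
proof -
  have "hgen (a # x) v = single x v + (\<Sum>i<length x. single (a # (take i x @ drop (Suc i) x)) (sg (Suc i) v))"
    unfolding hgen_def length_Cons sum.lessThan_Suc_shift by simp
  also have "(\<Sum>i<length x. single (a # (take i x @ drop (Suc i) x)) (sg (Suc i) v))
      = - prep a (hgen x v)"
    unfolding hgen_def by (simp add: lin_sum[OF lin_prep] prep_single sg_Suc single_uminus sum_negf)
  finally show ?thesis by (simp only: diff_conv_add_uminus)
qed

lemma pgen_Cons: "pgen \<alpha> (a # x) v = single (\<alpha> a # a # x) v - prep (\<alpha> a) (pgen \<alpha> x v)"
proof -
  have "pgen \<alpha> (a # x) v = single (\<alpha> a # a # x) v +
      (\<Sum>i<length x. single (\<alpha> a # (take (Suc i) (map \<alpha> x) @ drop i x)) (sg (Suc i) v))"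
    unfolding pgen_def length_Cons sum.lessThan_Suc_shift by simp
  also have "(\<Sum>i<length x. single (\<alpha> a # (take (Suc i) (map \<alpha> x) @ drop i x)) (sg (Suc i) v))
      = - prep (\<alpha> a) (pgen \<alpha> x v)"
    unfolding pgen_def by (simp add: lin_sum[OF lin_prep] prep_single sg_Suc single_uminus sum_negf)
  finally show ?thesis by (simp only: diff_conv_add_uminus)
qed

lemma hbd_prep: "fs Y \<Longrightarrow> hbd (prep a Y) = Y - prep a (hbd Y)"
  by (rule lin_eqI[OF lin_comp[OF lin_hbd lin_prep] lin_minus[OF lin_id lin_comp[OF lin_prep lin_hbd]]])
     (simp_all add: prep_single hbd_single hgen_Cons)

lemma pD_prep: "fs Z \<Longrightarrow> pD \<alpha> (prep a Z) = prep (\<alpha> a) (prep a Z) - prep (\<alpha> a) (pD \<alpha> Z)"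
  by (rule lin_eqI[OF lin_comp[OF lin_pD lin_prep] lin_minus[OF lin_comp[OF lin_prep lin_prep] lin_comp[OF lin_prep lin_pD]]])
     (simp_all add: prep_single pD_single pgen_Cons)

lemma homotopy_single:
  "hbd (pD \<alpha> (single x v)) + pD \<alpha> (hbd (single x v)) = single x v - mapc \<alpha> (single x v)"
proof (induction x arbitrary: v)
  case Nil
  have "pD \<alpha> (single [] v) = 0" "hbd (single [] v) = 0" by (simp_all add: pD_single hbd_single)
  moreover have "mapc \<alpha> (single [] v) = single [] v" by (simp add: mapc_single)
  ultimately show ?case by (metis lin_zero[OF lin_pD] lin_zero[OF lin_hbd] add_0 diff_self)
next
  case (Cons x0 x')
  define a where "a = \<alpha> x0"
  define Y where "Y = single x' v"
  define X where "X = single (x0 # x') v"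
  have fY: "fs Y" and fX: "fs X" by (simp_all add: Y_def X_def)
  have XY: "X = prep x0 Y" by (simp add: X_def Y_def prep_single)
  have IH: "hbd (pD \<alpha> Y) + pD \<alpha> (hbd Y) = Y - mapc \<alpha> Y" unfolding Y_def by (rule Cons.IH)
  have pDX: "pD \<alpha> X = prep a X - prep a (pD \<alpha> Y)"
    by (simp add: X_def Y_def pD_single pgen_Cons prep_single a_def)
  have hX: "hbd X = Y - prep x0 (hbd Y)" using hbd_prep[OF fY] XY by simp
  have m: "mapc \<alpha> X = prep a (mapc \<alpha> Y)" by (simp add: X_def Y_def mapc_single prep_single a_def)
  have e1: "hbd (pD \<alpha> X) = (X - prep a (hbd X)) - (pD \<alpha> Y - prep a (hbd (pD \<alpha> Y)))"
    unfolding pDX by (simp add: lin_diff[OF lin_hbd] hbd_prep fX fY)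
  have e2: "pD \<alpha> (hbd X) = pD \<alpha> Y - (prep a (prep x0 (hbd Y)) - prep a (pD \<alpha> (hbd Y)))"
    unfolding hX by (simp add: lin_diff[OF lin_pD] pD_prep fY a_def)
  have e3: "prep a (hbd X) = prep a Y - prep a (prep x0 (hbd Y))"
    unfolding hX by (simp add: lin_diff[OF lin_prep] fY)
  have "prep a (hbd (pD \<alpha> Y)) + prep a (pD \<alpha> (hbd Y)) = prep a Y - prep a (mapc \<alpha> Y)"
    using IH lin_add[OF lin_prep] lin_diff[OF lin_prep] fY by (metis fs_hbd fs_pD fs_mapc)
  then have e4: "prep a (hbd (pD \<alpha> Y)) = prep a Y - prep a (mapc \<alpha> Y) - prep a (pD \<alpha> (hbd Y))"
    by (simp add: algebra_simps)
  have "hbd (pD \<alpha> X) + pD \<alpha> (hbd X) = X - mapc \<alpha> X"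
    unfolding e1 e2 e3 e4 m by (simp add: algebra_simps)
  then show ?case by (simp add: X_def)
qed

lemma homotopy: "fs c \<Longrightarrow> hbd (pD \<alpha> c) + pD \<alpha> (hbd c) = c - mapc \<alpha> c"
  by (rule lin_eqI[OF lin_plus[OF lin_comp[OF lin_hbd lin_pD] lin_comp[OF lin_pD lin_hbd]] lin_minus[OF lin_id lin_mapc]])
     (simp_all add: homotopy_single)

lemma hgen_map: "hgen (map \<alpha> x) v = mapc \<alpha> (hgen x v)"
  unfolding hgen_def by (simp add: lin_sum[OF lin_mapc] mapc_single take_map drop_map)

lemma hbd_mapc: "fs c \<Longrightarrow> hbd (mapc \<alpha> c) = mapc \<alpha> (hbd c)"
  by (rule lin_eqI[OF lin_comp[OF lin_hbd lin_mapc] lin_comp[OF lin_mapc lin_hbd]])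
     (simp_all add: hbd_single mapc_single hgen_map)




locale hsetup = comm_group G for G (structure) +
  fixes \<rho> :: "'g \<Rightarrow> 'v::ab_group_add \<Rightarrow> 'v" and H :: "'g set"
  assumes rho_add: "g \<in> carrier G \<Longrightarrow> \<rho> g (a + b) = \<rho> g a + \<rho> g b"
    and rho_mult: "g \<in> carrier G \<Longrightarrow> h \<in> carrier G \<Longrightarrow> \<rho> (g \<otimes> h) = \<rho> g \<circ> \<rho> h"
    and rho_one: "\<rho> \<one> = id"
    and sub: "subgroup H G"
    and fin: "finite (rcosets H)"
begin

lemma rho_mult_apply: "g \<in> carrier G \<Longrightarrow> h \<in> carrier G \<Longrightarrow> \<rho> (g \<otimes> h) v = \<rho> g (\<rho> h v)"
  using rho_mult by simp
lemma rho_zero: "g \<in> carrier G \<Longrightarrow> \<rho> g 0 = 0"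
  using rho_add[of g 0 0] by simp
lemma rho_uminus: "g \<in> carrier G \<Longrightarrow> \<rho> g (- a) = - \<rho> g a"
  using rho_add[of g a "-a"] rho_zero[of g] by (simp add: eq_neg_iff_add_eq_0 add.commute)
lemma rho_sg: "g \<in> carrier G \<Longrightarrow> \<rho> g (sg i a) = sg i (\<rho> g a)"
  by (simp add: sg_def rho_uminus)
lemma rho_one_apply[simp]: "\<rho> \<one> v = v" by (simp add: rho_one)

lemma H_carrier: "h \<in> H \<Longrightarrow> h \<in> carrier G"
  by (rule subgroup.mem_carrier[OF sub])

lemma cancel1[simp]: "x \<in> carrier G \<Longrightarrow> y \<in> carrier G \<Longrightarrow> x \<otimes> (inv x \<otimes> y) = y"
  by (simp add: m_assoc[symmetric])
lemma cancel3[simp]: "x \<in> carrier G \<Longrightarrow> y \<in> carrier G \<Longrightarrow> x \<otimes> y \<otimes> inv y = x"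
  by (simp add: m_assoc)
lemma cancel4[simp]: "x \<in> carrier G \<Longrightarrow> y \<in> carrier G \<Longrightarrow> x \<otimes> inv y \<otimes> y = x"
  by (simp add: m_assoc)
lemma cancel2[simp]: "x \<in> carrier G \<Longrightarrow> y \<in> carrier G \<Longrightarrow> inv x \<otimes> (x \<otimes> y) = y"
  by (simp add: m_assoc[symmetric])

abbreviation Gl :: "'g list \<Rightarrow> bool" where "Gl x \<equiv> set x \<subseteq> carrier G"

fun quots :: "'g list \<Rightarrow> 'g list" where
  "quots (a # b # r) = (inv a \<otimes> b) # quots (b # r)"
| "quots _ = []"

fun pp :: "'g \<Rightarrow> 'g list \<Rightarrow> 'g list" where
  "pp a [] = [a]"
| "pp a (y # ys) = a # pp (a \<otimes> y) ys"

lemma length_quots[simp]: "length (quots x) = length x - 1"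
  by (induction x rule: quots.induct) auto

lemma quots_Gl: "Gl x \<Longrightarrow> Gl (quots x)"
  by (induction x rule: quots.induct) auto

lemma quots_tl: "quots (tl x) = tl (quots x)"
  by (induction x rule: quots.induct) auto

lemma quots_butlast: "quots (butlast x) = butlast (quots x)"
proof (induction x rule: quots.induct)
  case (1 a b r) then show ?case by (cases r) auto
qed auto

lemma quots_delete:
  "Gl x \<Longrightarrow> 0 < i \<Longrightarrow> Suc i < length x \<Longrightarrow>
   quots (take i x @ drop (Suc i) x) =
     take (i - 1) (quots x) @ [quots x ! (i - 1) \<otimes> quots x ! i] @ drop (i + 1) (quots x)"
proof (induction x arbitrary: i rule: quots.induct)
  case (1 a b r)
  show ?case
  proof (cases "i = 1")
    case True
    then obtain c r' where r: "r = c # r'" using 1 by (cases r) auto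
    then show ?thesis using True 1(2) by (simp add: m_assoc[symmetric])
  next
    case False
    then obtain j where j: "i = Suc j" "0 < j" using 1 by (cases i) auto
    have "take i (a # b # r) @ drop (Suc i) (a # b # r) = a # (take j (b # r) @ drop (Suc j) (b # r))"
      using j by simp
    moreover obtain w where "take j (b # r) @ drop (Suc j) (b # r) = b # w" using j by (cases j) auto
    moreover have IH: "quots (take j (b # r) @ drop (Suc j) (b # r)) =
      take (j - 1) (quots (b # r)) @ [quots (b # r) ! (j - 1) \<otimes> quots (b # r) ! j] @ drop (j + 1) (quots (b # r))"
      using 1 j by auto
    ultimately show ?thesis using j by (cases j) auto
  qed
qed auto

lemma quots_map_left: "g \<in> carrier G \<Longrightarrow> Gl x \<Longrightarrow> quots (map ((\<otimes>) g) x) = quots x"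
  by (induction x rule: quots.induct) (auto simp: inv_mult m_ac)

lemma quots_map_right: "c \<in> carrier G \<Longrightarrow> Gl x \<Longrightarrow> quots (map (\<lambda>y. y \<otimes> c) x) = quots x"
  by (induction x rule: quots.induct) (auto simp: inv_mult m_ac)

lemma length_pp[simp]: "length (pp a q) = Suc (length q)"
  by (induction q arbitrary: a) auto

lemma pp_Gl: "a \<in> carrier G \<Longrightarrow> Gl q \<Longrightarrow> Gl (pp a q)"
  by (induction q arbitrary: a) auto

lemma pp_H: "a \<in> H \<Longrightarrow> set q \<subseteq> H \<Longrightarrow> set (pp a q) \<subseteq> H"
  by (induction q arbitrary: a) (auto intro: subgroup.m_closed[OF sub])

lemma hd_pp[simp]: "hd (pp a q) = a" by (cases q) auto
lemma pp_ne[simp]: "pp a q \<noteq> []" by (cases q) auto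

lemma quots_pp: "a \<in> carrier G \<Longrightarrow> Gl q \<Longrightarrow> quots (pp a q) = q"
proof (induction q arbitrary: a)
  case (Cons y ys)
  then show ?case by (cases ys) auto
qed auto

lemma pp_quots: "a \<in> carrier G \<Longrightarrow> Gl (b # r) \<Longrightarrow> pp a (quots (b # r)) = map (\<lambda>y. a \<otimes> (inv b \<otimes> y)) (b # r)"
proof (induction r arbitrary: a b)
  case Nil then show ?case by simp
next
  case (Cons c r)
  have "pp (a \<otimes> (inv b \<otimes> c)) (quots (c # r)) = map (\<lambda>y. (a \<otimes> (inv b \<otimes> c)) \<otimes> (inv c \<otimes> y)) (c # r)"
    using Cons by auto
  moreover have "\<And>y. y \<in> carrier G \<Longrightarrow> (a \<otimes> (inv b \<otimes> c)) \<otimes> (inv c \<otimes> y) = a \<otimes> (inv b \<otimes> y)"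
    using Cons.prems by (simp add: m_assoc)
  moreover have "map (\<lambda>y. (a \<otimes> (inv b \<otimes> c)) \<otimes> (inv c \<otimes> y)) r = map (\<lambda>y. a \<otimes> (inv b \<otimes> y)) r"
    by (rule map_cong) (use Cons.prems in \<open>auto simp: m_assoc\<close>)
  ultimately show ?case using Cons.prems by simp
qed

end



context hsetup begin

definition bgen :: "'g list \<Rightarrow> 'v \<Rightarrow> 'g list \<Rightarrow> 'v" where
  "bgen \<sigma> v = (if \<sigma> \<noteq> [] \<and> Gl \<sigma> then (\<Sum>i\<in>{0..length \<sigma>}. single (bar_face G i \<sigma>)
     (let x = (if i = 0 then \<rho> (inv (\<sigma> ! 0)) v else v) in if even i then x else - x)) else 0)"
definition bbd :: "('g list \<Rightarrow> 'v) \<Rightarrow> 'g list \<Rightarrow> 'v" where "bbd = ext bgen"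
definition prgen :: "'g list \<Rightarrow> 'v \<Rightarrow> 'g list \<Rightarrow> 'v" where
  "prgen x v = (if x \<noteq> [] \<and> Gl x then single (quots x) (\<rho> (inv (hd x)) v) else 0)"
definition pr :: "('g list \<Rightarrow> 'v) \<Rightarrow> 'g list \<Rightarrow> 'v" where "pr = ext prgen"

lemma addF_bgen: "addF bgen"
proof -
  have "bgen \<sigma> (a + b) = bgen \<sigma> a + bgen \<sigma> b" for \<sigma> a b
  proof (cases "\<sigma> \<noteq> [] \<and> Gl \<sigma>")
    case True
    then have c: "\<sigma> ! 0 \<in> carrier G" by (cases \<sigma>) auto
    have X: "(let x = (if i = 0 then \<rho> (inv (\<sigma> ! 0)) (a + b) else a + b) in if even i then x else - x)
       = (let x = (if i = 0 then \<rho> (inv (\<sigma> ! 0)) a else a) in if even i then x else - x) +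
         (let x = (if i = 0 then \<rho> (inv (\<sigma> ! 0)) b else b) in if even i then x else - x)" for i
      by (auto simp: Let_def rho_add[OF inv_closed[OF c]])
    show ?thesis using True
      by (simp only: bgen_def X single_add sum.distrib) (simp only: True simp_thms if_True)
  qed (auto simp: bgen_def)
  moreover have "fs (bgen \<sigma> v)" for \<sigma> v by (simp add: bgen_def)
  ultimately show ?thesis by (simp add: addF_def)
qed

lemma addF_prgen: "addF prgen"
proof -
  have "prgen x (a + b) = prgen x a + prgen x b" for x a b
  proof (cases "x \<noteq> [] \<and> Gl x")
    case True
    then have c: "hd x \<in> carrier G" by (cases x) auto
    show ?thesis using True by (simp add: prgen_def rho_add[OF inv_closed[OF c]] single_add)
  qed (auto simp: prgen_def)
  moreover have "fs (prgen x v)" for x v by (simp add: prgen_def)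
  ultimately show ?thesis by (simp add: addF_def)
qed

lemma lin_bbd: "lin bbd" by (simp add: bbd_def lin_ext addF_bgen)
lemma lin_pr: "lin pr" by (simp add: pr_def lin_ext addF_prgen)
lemma bbd_single: "bbd (single x v) = bgen x v" by (simp add: bbd_def ext_single addF_bgen)
lemma pr_single: "pr (single x v) = prgen x v" by (simp add: pr_def ext_single addF_prgen)
lemma fs_bbd[simp]: "fs c \<Longrightarrow> fs (bbd c)" by (rule lin_fs[OF lin_bbd])
lemma fs_pr[simp]: "fs c \<Longrightarrow> fs (pr c)" by (rule lin_fs[OF lin_pr])

lemma bar_bd_eq:
  assumes "fs c" "onP (\<lambda>\<sigma>. length \<sigma> = k \<and> Gl \<sigma>) c"
  shows "bar_bd G \<rho> k c = bbd c"
proof (cases "k = 0")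
  case True
  have "bgen \<sigma> (c \<sigma>) = 0" if "\<sigma> \<in> supp c" for \<sigma>
    using that assms(2) True by (auto simp: onP_def supp_def bgen_def)
  then have "bbd c = 0" by (simp add: bbd_def ext_def)
  then show ?thesis using True by (simp add: bar_bd_def zero_fun_def)
next
  case False
  show ?thesis
  proof (rule ext)
    fix \<tau>
    have "bbd c \<tau> = (\<Sum>\<sigma>\<in>supp c. bgen \<sigma> (c \<sigma>) \<tau>)" by (simp add: bbd_def ext_def sum_apply)
    also have "\<dots> = bar_bd G \<rho> k c \<tau>"
      unfolding bar_bd_def using False
      apply (simp add: supp_def)
      apply (rule sum.cong, simp)
      using assms(2) by (auto simp: onP_def bgen_def sum_apply single_def Let_def intro!: sum.cong)
    finally show "bar_bd G \<rho> k c \<tau> = bbd c \<tau>" by simp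
  qed
qed

lemma chain_gen:
  assumes "Gl x"
  shows "bbd (prgen x v) = pr (hgen x v)"
proof -
  have r: "pr (hgen x v) = (\<Sum>i<length x. prgen (take i x @ drop (Suc i) x) (sg i v))"
    unfolding hgen_def by (simp add: lin_sum[OF lin_pr] pr_single)
  show ?thesis
  proof (cases x)
    case Nil then show ?thesis by (simp add: prgen_def r lin_zero[OF lin_bbd] lin_zero[OF lin_pr])
  next
    case (Cons a r1)
    note xa = this
    show ?thesis
    proof (cases r1)
      case Nil
      then show ?thesis unfolding r using assms xa by (simp add: prgen_def bbd_single bgen_def)
    next
      case (Cons b r2)
      define q where "q = quots x"
      have a: "a \<in> carrier G" and b: "b \<in> carrier G" using assms xa Cons by auto
      have q0: "q ! 0 = inv a \<otimes> b" using xa Cons by (simp add: q_def)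
      have lq: "length q = length x - 1" by (simp add: q_def)
      have qne: "q \<noteq> []" using xa Cons by (simp add: q_def)
      have Gq: "Gl q" using quots_Gl[OF assms] by (simp add: q_def)
      have lhs: "bbd (prgen x v) = bgen q (\<rho> (inv a) v)"
        using xa Cons assms by (simp add: prgen_def bbd_single q_def)
      have st: "{0..length q} = {..<length x}" using lq xa by auto
      have tm: "prgen (take i x @ drop (Suc i) x) (sg i v) =
         single (bar_face G i q) (let y = (if i = 0 then \<rho> (inv (q ! 0)) (\<rho> (inv a) v) else \<rho> (inv a) v)
            in if even i then y else - y)" if i: "i < length x" for i
      proof -
        have ne: "take i x @ drop (Suc i) x \<noteq> []" using xa Cons i by (cases i) auto
        have Gd: "Gl (take i x @ drop (Suc i) x)"
          using assms set_take_subset[of i x] set_drop_subset[of "Suc i" x] by auto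
        consider "i = 0" | "0 < i" "i < length q" | "i = length q" using i lq by linarith
        then show ?thesis
        proof cases
          case 1
          have "\<rho> (inv (inv a \<otimes> b)) (\<rho> (inv a) v) = \<rho> (inv b) v"
            using a b by (simp add: rho_mult_apply[symmetric] inv_mult_group m_assoc)
          then show ?thesis using 1 ne Gd xa Cons q0
            by (simp add: prgen_def bar_face_def q_def)
        next
          case 2
          have hd: "hd (take i x @ drop (Suc i) x) = a" using xa 2 by (cases i) auto
          have "quots (take i x @ drop (Suc i) x) = bar_face G i q"
            using quots_delete[OF assms, of i] 2 lq by (simp add: bar_face_def q_def)
          then show ?thesis using 2 ne Gd hd a
            by (simp add: prgen_def sg_def Let_def rho_uminus[OF inv_closed[OF a]])
        next
          case 3
          have bl: "take i x @ drop (Suc i) x = butlast x" using 3 lq i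
            by (simp add: butlast_conv_take)
          have hd: "hd (butlast x) = a" using xa Cons by simp
          have e1: "quots (butlast x) = butlast q" by (simp only: q_def quots_butlast)
          have "bar_face G i q = butlast q" using 3 qne by (simp add: bar_face_def)
          then have "quots (butlast x) = bar_face G i q" using e1 by simp
          moreover have "butlast x \<noteq> []" "Gl (butlast x)" using ne Gd bl by metis+
          ultimately show ?thesis unfolding bl using 3 hd a qne
            by (simp add: prgen_def sg_def Let_def rho_uminus[OF inv_closed[OF a]])
        qed
      qed
      show ?thesis unfolding lhs r using qne Gq
        by (simp add: bgen_def st tm)
    qed
  qed
qed

lemma chain_map: "fs Y \<Longrightarrow> onP Gl Y \<Longrightarrow> bbd (pr Y) = pr (hbd Y)"
  by (rule lin_eqI[OF lin_comp[OF lin_bbd lin_pr] lin_comp[OF lin_pr lin_hbd]])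
     (simp_all add: pr_single hbd_single chain_gen onP_def)

end



context hsetup begin

lemma Hone: "\<one> \<in> H" by (rule subgroup.one_closed[OF sub])
lemma Hinv: "h \<in> H \<Longrightarrow> inv h \<in> H" by (rule subgroup.m_inv_closed[OF sub])
lemma Hmult: "h \<in> H \<Longrightarrow> k \<in> H \<Longrightarrow> h \<otimes> k \<in> H" by (rule subgroup.m_closed[OF sub])
lemma H_sub: "H \<subseteq> carrier G" using H_carrier by blast

definition same :: "'g \<Rightarrow> 'g \<Rightarrow> bool" where "same x y \<longleftrightarrow> inv x \<otimes> y \<in> H"

lemma same_refl: "x \<in> carrier G \<Longrightarrow> same x x" by (simp add: same_def Hone)
lemma same_sym: "x \<in> carrier G \<Longrightarrow> y \<in> carrier G \<Longrightarrow> same x y \<Longrightarrow> same y x"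
  unfolding same_def using Hinv[of "inv x \<otimes> y"] by (simp add: inv_mult_group)
lemma same_trans: "x \<in> carrier G \<Longrightarrow> y \<in> carrier G \<Longrightarrow> z \<in> carrier G \<Longrightarrow> same x y \<Longrightarrow> same y z \<Longrightarrow> same x z"
  unfolding same_def using Hmult[of "inv x \<otimes> y" "inv y \<otimes> z"] by (simp add: m_assoc)
lemma same_mult: "x \<in> carrier G \<Longrightarrow> y \<in> carrier G \<Longrightarrow> a \<in> carrier G \<Longrightarrow> same x y \<Longrightarrow> same (a \<otimes> x) (a \<otimes> y)"
  unfolding same_def by (simp add: inv_mult_group m_assoc)
lemma same_inv: "x \<in> carrier G \<Longrightarrow> y \<in> carrier G \<Longrightarrow> same x y \<Longrightarrow> same (inv x) (inv y)"
  unfolding same_def using Hinv[of "inv x \<otimes> y"] by (simp add: inv_mult_group m_comm)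

definition r :: "'g \<Rightarrow> 'g" where "r y = (SOME z. z \<in> carrier G \<and> same y z)"

lemma r_prop: "y \<in> carrier G \<Longrightarrow> r y \<in> carrier G \<and> same y (r y)"
  unfolding r_def by (rule someI[of _ y]) (simp add: same_refl)
lemma r_carrier[simp]: "y \<in> carrier G \<Longrightarrow> r y \<in> carrier G" using r_prop by blast
lemma r_same: "y \<in> carrier G \<Longrightarrow> same y (r y)" using r_prop by blast
lemma r_cong: assumes "x \<in> carrier G" "y \<in> carrier G" "same x y" shows "r x = r y"
proof -
  have "(\<lambda>z. z \<in> carrier G \<and> same x z) = (\<lambda>z. z \<in> carrier G \<and> same y z)"
  proof (rule ext, rule iffI)
    fix z assume "z \<in> carrier G \<and> same x z"
    then show "z \<in> carrier G \<and> same y z"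
      using same_trans[of y x z] same_sym[OF assms] assms by blast
  next
    fix z assume "z \<in> carrier G \<and> same y z"
    then show "z \<in> carrier G \<and> same x z"
      using same_trans[of x y z] assms by blast
  qed
  then show ?thesis by (simp add: r_def)
qed

definition T :: "'g set" where "T = r ` carrier G"

lemma T_carrier: "t \<in> T \<Longrightarrow> t \<in> carrier G" by (auto simp: T_def)
lemma r_idem: assumes "t \<in> T" shows "r t = t"
proof -
  obtain u where u: "u \<in> carrier G" "t = r u" using assms by (auto simp: T_def)
  have "r u = r (r u)" by (rule r_cong[OF u(1) r_carrier[OF u(1)] r_same[OF u(1)]])
  then show ?thesis using u by simp
qed
lemma T_ne: "T \<noteq> {}" by (auto simp: T_def)

lemma fin_T: "finite T"
proof -
  have inj: "inj_on (\<lambda>t. H #> t) T"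
  proof (rule inj_onI)
    fix t1 t2 assume t: "t1 \<in> T" "t2 \<in> T" "H #> t1 = H #> t2"
    have c: "t1 \<in> carrier G" "t2 \<in> carrier G" using t T_carrier by auto
    have "t2 \<in> H #> t1" using rcos_self[OF c(2) sub] t(3) by simp
    then have "t2 \<otimes> inv t1 \<in> H" using subgroup.rcos_module_imp[OF sub is_group c(1)] by blast
    then have "same t1 t2" using c by (simp add: same_def m_comm)
    then show "t1 = t2" using r_cong[OF c] r_idem t by metis
  qed
  have "(\<lambda>t. H #> t) ` T \<subseteq> rcosets H" using T_carrier rcosetsI[OF H_sub] by auto
  then have "finite ((\<lambda>t. H #> t) ` T)" using fin finite_subset by blast
  then show ?thesis using finite_imageD[OF _ inj] by blast
qed

lemma card_T: "card T > 0" using fin_T T_ne by (simp add: card_gt_0_iff)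

definition \<alpha> :: "'g \<Rightarrow> 'g \<Rightarrow> 'g" where "\<alpha> t y = y \<otimes> inv (r (inv t \<otimes> y))"

lemma \<alpha>_carrier[simp]: "t \<in> carrier G \<Longrightarrow> y \<in> carrier G \<Longrightarrow> \<alpha> t y \<in> carrier G"
  by (simp add: \<alpha>_def)

lemma same_\<alpha>: assumes "t \<in> carrier G" "y \<in> carrier G" shows "same t (\<alpha> t y)"
proof -
  define u where "u = inv t \<otimes> y"
  have u: "u \<in> carrier G" using assms by (simp add: u_def)
  have "inv u \<otimes> r u \<in> H" using r_same[OF u] by (simp add: same_def)
  then have "inv (inv u \<otimes> r u) \<in> H" by (rule Hinv)
  moreover have "inv (inv u \<otimes> r u) = inv t \<otimes> \<alpha> t y"
    using assms u by (simp add: \<alpha>_def u_def inv_mult_group m_assoc m_comm)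
  ultimately show ?thesis by (simp add: same_def)
qed

lemma quot_\<alpha>_H: "t \<in> carrier G \<Longrightarrow> a \<in> carrier G \<Longrightarrow> b \<in> carrier G \<Longrightarrow> inv (\<alpha> t a) \<otimes> \<alpha> t b \<in> H"
proof -
  assume a: "t \<in> carrier G" "a \<in> carrier G" "b \<in> carrier G"
  have "same (\<alpha> t a) t" using same_sym[OF a(1) \<alpha>_carrier[OF a(1,2)] same_\<alpha>[OF a(1,2)]] .
  then have "same (\<alpha> t a) (\<alpha> t b)"
    using same_trans[OF \<alpha>_carrier[OF a(1,2)] a(1) \<alpha>_carrier[OF a(1,3)]] same_\<alpha>[OF a(1,3)] by blast
  then show ?thesis by (simp add: same_def)
qed

lemma \<alpha>_H: assumes "t \<in> carrier G" "y \<in> H" shows "\<alpha> t y = y \<otimes> inv (r (inv t))"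
proof -
  have y: "y \<in> carrier G" using assms H_carrier by auto
  have "same (inv t) (inv t \<otimes> y)" using assms y by (simp add: same_def)
  then have "r (inv t \<otimes> y) = r (inv t)" using r_cong assms y by (metis inv_closed m_closed)
  then show ?thesis by (simp add: \<alpha>_def)
qed

lemma \<alpha>_shift:
  assumes g: "g \<in> carrier G" and y: "y \<in> carrier G" and t: "t \<in> carrier G"
  shows "\<alpha> t (g \<otimes> y) = g \<otimes> \<alpha> (r (inv g \<otimes> t)) y"
proof -
  define t' where "t' = r (inv g \<otimes> t)"
  have t': "t' \<in> carrier G" using g t by (simp add: t'_def)
  have "same (inv g \<otimes> t) t'" using r_same g t by (simp add: t'_def)
  then have "same (inv (inv g \<otimes> t)) (inv t')" using same_inv g t t' by simp
  then have "same (y \<otimes> inv (inv g \<otimes> t)) (y \<otimes> inv t')" using same_mult g t t' y by simp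
  moreover have "y \<otimes> inv (inv g \<otimes> t) = inv t \<otimes> (g \<otimes> y)" using g t y by (simp add: inv_mult m_ac)
  moreover have "y \<otimes> inv t' = inv t' \<otimes> y" using y t' by (simp add: m_comm)
  ultimately have "r (inv t \<otimes> (g \<otimes> y)) = r (inv t' \<otimes> y)"
    using r_cong g t y t' by (metis inv_closed m_closed)
  then show ?thesis using g y t t' by (simp add: \<alpha>_def t'_def m_assoc)
qed

lemma T_reindex:
  assumes g: "g \<in> carrier G"
  shows "(\<Sum>t\<in>T. f (r (inv g \<otimes> t))) = (\<Sum>t\<in>T. (f t :: 'z::comm_monoid_add))"
proof (rule sum.reindex_bij_witness[of T "\<lambda>t. r (g \<otimes> t)" "\<lambda>t. r (inv g \<otimes> t)"])
  fix t assume t: "t \<in> T"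
  have tc: "t \<in> carrier G" using T_carrier t by auto
  have "same (g \<otimes> t) (r (g \<otimes> t))" using r_same g tc by simp
  then have "same (inv g \<otimes> (g \<otimes> t)) (inv g \<otimes> r (g \<otimes> t))"
    using same_mult[of "g \<otimes> t" "r (g \<otimes> t)" "inv g"] g tc by simp
  then have "r t = r (inv g \<otimes> r (g \<otimes> t))" using r_cong g tc by simp
  then show "r (inv g \<otimes> r (g \<otimes> t)) = t" using r_idem t by simp
  have "same (inv g \<otimes> t) (r (inv g \<otimes> t))" using r_same g tc by simp
  then have "same (g \<otimes> (inv g \<otimes> t)) (g \<otimes> r (inv g \<otimes> t))"
    using same_mult[of "inv g \<otimes> t" "r (inv g \<otimes> t)" g] g tc by simp
  then have "r t = r (g \<otimes> r (inv g \<otimes> t))" using r_cong g tc by simp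
  then show "r (g \<otimes> r (inv g \<otimes> t)) = t" using r_idem t by simp
  show "r (g \<otimes> t) \<in> T" using g tc by (simp add: T_def)
  show "r (inv g \<otimes> t) \<in> T" using g tc by (simp add: T_def)
qed simp

end



context hsetup begin

definition agen :: "'g \<Rightarrow> 'g list \<Rightarrow> 'v \<Rightarrow> 'g list \<Rightarrow> 'v" where
  "agen g x v = (if g \<in> carrier G then single (map ((\<otimes>) g) x) (\<rho> g v) else 0)"
definition act :: "'g \<Rightarrow> ('g list \<Rightarrow> 'v) \<Rightarrow> 'g list \<Rightarrow> 'v" where "act g = ext (agen g)"
definition sec :: "('g list \<Rightarrow> 'v) \<Rightarrow> 'g list \<Rightarrow> 'v" where "sec = ext (\<lambda>q v. single (pp \<one> q) v)"
definition th :: "('g list \<Rightarrow> 'v) \<Rightarrow> 'g list \<Rightarrow> 'v" where "th X = (\<Sum>t\<in>T. mapc (\<alpha> t) X)"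
definition DD :: "('g list \<Rightarrow> 'v) \<Rightarrow> 'g list \<Rightarrow> 'v" where "DD X = (\<Sum>t\<in>T. pD (\<alpha> t) X)"
definition tr :: "('g list \<Rightarrow> 'v) \<Rightarrow> 'g list \<Rightarrow> 'v" where "tr X = pr (th (sec X))"

lemma addF_agen: "addF (agen g)"
  by (auto simp: addF_def agen_def rho_add single_add)

lemma lin_act: "lin (act g)" by (simp add: act_def lin_ext addF_agen)
lemma lin_sec: "lin sec" by (simp add: sec_def lin_ext addF_single)
lemma lin_th: "lin th" unfolding th_def by (rule lin_sumL) (rule lin_mapc)
lemma lin_DD: "lin DD" unfolding DD_def by (rule lin_sumL) (rule lin_pD)
lemma lin_tr: "lin tr" unfolding tr_def by (rule lin_comp[OF lin_pr lin_comp[OF lin_th lin_sec]])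

lemma act_single: "g \<in> carrier G \<Longrightarrow> act g (single x v) = single (map ((\<otimes>) g) x) (\<rho> g v)"
  by (simp add: act_def ext_single addF_agen agen_def)
lemma sec_single: "sec (single q v) = single (pp \<one> q) v"
  by (simp add: sec_def ext_single addF_single)
lemma th_single: "th (single x v) = (\<Sum>t\<in>T. single (map (\<alpha> t) x) v)"
  by (simp add: th_def mapc_single)

lemma fs_act[simp]: "fs c \<Longrightarrow> fs (act g c)" by (rule lin_fs[OF lin_act])
lemma fs_sec[simp]: "fs c \<Longrightarrow> fs (sec c)" by (rule lin_fs[OF lin_sec])
lemma fs_th[simp]: "fs c \<Longrightarrow> fs (th c)" by (rule lin_fs[OF lin_th])
lemma fs_DD[simp]: "fs c \<Longrightarrow> fs (DD c)" by (rule lin_fs[OF lin_DD])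
lemma fs_tr[simp]: "fs c \<Longrightarrow> fs (tr c)" by (rule lin_fs[OF lin_tr])

lemma onPD: "onP P X \<Longrightarrow> X \<sigma> \<noteq> 0 \<Longrightarrow> P \<sigma>" by (simp add: onP_def)

lemma onP_Gl_act: assumes a: "fs X" "onP Gl X" "g \<in> carrier G" shows "onP Gl (act g X)"
proof (rule onP_lin[OF lin_act a(1)])
  fix \<sigma> assume "X \<sigma> \<noteq> 0"
  then have "Gl \<sigma>" using a(2) by (simp add: onP_def)
  then show "onP Gl (act g (single \<sigma> (X \<sigma>)))" using a by (auto simp: act_single subset_iff intro!: onP_single)
qed

lemma onP_Gl_mapc: assumes a: "fs X" "onP Gl X" "t \<in> carrier G" shows "onP Gl (mapc (\<alpha> t) X)"
proof (rule onP_lin[OF lin_mapc a(1)])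
  fix \<sigma> assume "X \<sigma> \<noteq> 0"
  then have "Gl \<sigma>" using a(2) by (simp add: onP_def)
  then show "onP Gl (mapc (\<alpha> t) (single \<sigma> (X \<sigma>)))" using a by (auto simp: mapc_single subset_iff intro!: onP_single)
qed

lemma onP_Gl_th: "fs X \<Longrightarrow> onP Gl X \<Longrightarrow> onP Gl (th X)"
  unfolding th_def by (rule onP_sum) (simp add: onP_Gl_mapc T_carrier)

lemma onP_hbd: assumes a: "fs X" "onP P X" "\<And>x i. P x \<Longrightarrow> i < length x \<Longrightarrow> Q (take i x @ drop (Suc i) x)"
  shows "onP Q (hbd X)"
proof (rule onP_lin[OF lin_hbd a(1)])
  fix \<sigma> assume "X \<sigma> \<noteq> 0"
  then have "P \<sigma>" using a(2) by (simp add: onP_def)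
  then show "onP Q (hbd (single \<sigma> (X \<sigma>)))" using a(3) by (auto simp: hbd_single hgen_def intro!: onP_sum onP_single)
qed

lemma onP_pD: assumes a: "fs X" "onP P X" "\<And>x i. P x \<Longrightarrow> i < length x \<Longrightarrow> Q (take (Suc i) (map \<alpha>' x) @ drop i x)"
  shows "onP Q (pD \<alpha>' X)"
proof (rule onP_lin[OF lin_pD a(1)])
  fix \<sigma> assume "X \<sigma> \<noteq> 0"
  then have "P \<sigma>" using a(2) by (simp add: onP_def)
  then show "onP Q (pD \<alpha>' (single \<sigma> (X \<sigma>)))" using a(3) by (auto simp: pD_single pgen_def intro!: onP_sum onP_single)
qed

lemma onP_DD: assumes a: "fs X" "onP P X" "\<And>x i t. P x \<Longrightarrow> t \<in> T \<Longrightarrow> i < length x \<Longrightarrow> Q (take (Suc i) (map (\<alpha> t) x) @ drop i x)"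
  shows "onP Q (DD X)"
  unfolding DD_def by (rule onP_sum) (rule onP_pD[where P=P, OF a(1,2)], use a(3) in auto)

lemma onP_sec: assumes a: "fs X" "onP P X" "\<And>q. P q \<Longrightarrow> Q (pp \<one> q)" shows "onP Q (sec X)"
proof (rule onP_lin[OF lin_sec a(1)])
  fix \<sigma> assume "X \<sigma> \<noteq> 0"
  then have "P \<sigma>" using a(2) by (simp add: onP_def)
  then show "onP Q (sec (single \<sigma> (X \<sigma>)))" using a(3) by (auto simp: sec_single intro!: onP_single)
qed

lemma onP_pr: assumes a: "fs X" "onP P X" "\<And>x. P x \<Longrightarrow> x \<noteq> [] \<Longrightarrow> Gl x \<Longrightarrow> Q (quots x)" shows "onP Q (pr X)"
proof (rule onP_lin[OF lin_pr a(1)])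
  fix \<sigma> assume "X \<sigma> \<noteq> 0"
  then have "P \<sigma>" using a(2) by (simp add: onP_def)
  then show "onP Q (pr (single \<sigma> (X \<sigma>)))" using a(3) by (auto simp: pr_single prgen_def intro!: onP_single)
qed

lemma pr_act: "fs X \<Longrightarrow> onP Gl X \<Longrightarrow> g \<in> carrier G \<Longrightarrow> pr (act g X) = pr X"
proof (rule lin_eqI[OF lin_comp[OF lin_pr lin_act] lin_pr])
  fix \<sigma> assume a: "onP Gl X" "g \<in> carrier G" "X \<sigma> \<noteq> 0"
  then have G: "Gl \<sigma>" by (auto simp: onP_def)
  show "pr (act g (single \<sigma> (X \<sigma>))) = pr (single \<sigma> (X \<sigma>))"
  proof (cases \<sigma>)
    case (Cons b rest)
    have "inv (g \<otimes> b) \<otimes> g = inv b" using a G Cons by (simp add: inv_mult_group m_assoc)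
    then have "\<rho> (inv (g \<otimes> b)) (\<rho> g (X \<sigma>)) = \<rho> (inv b) (X \<sigma>)"
      using a G Cons by (simp add: rho_mult_apply[symmetric])
    then show ?thesis using a G Cons
      by (simp add: act_single pr_single prgen_def subset_iff quots_map_left[of g "b # rest", simplified])
  qed (simp add: act_single pr_single prgen_def a)
qed

lemma mapc_act:
  assumes "fs X" "onP Gl X" "g \<in> carrier G" "t \<in> carrier G"
  shows "mapc (\<alpha> t) (act g X) = act g (mapc (\<alpha> (r (inv g \<otimes> t))) X)"
proof (rule lin_eqI[OF lin_comp[OF lin_mapc lin_act] lin_comp[OF lin_act lin_mapc] assms(1)])
  fix \<sigma> assume "X \<sigma> \<noteq> 0"
  then have G: "Gl \<sigma>" using assms by (auto simp: onP_def)
  have m: "map (\<alpha> t) (map ((\<otimes>) g) \<sigma>) = map ((\<otimes>) g) (map (\<alpha> (r (inv g \<otimes> t))) \<sigma>)"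
    using G assms by (auto simp: \<alpha>_shift)
  show "mapc (\<alpha> t) (act g (single \<sigma> (X \<sigma>))) = act g (mapc (\<alpha> (r (inv g \<otimes> t))) (single \<sigma> (X \<sigma>)))"
    by (simp only: act_single[OF assms(3)] mapc_single m)
qed

lemma pD_act:
  assumes "fs X" "onP Gl X" "g \<in> carrier G" "t \<in> carrier G"
  shows "pD (\<alpha> t) (act g X) = act g (pD (\<alpha> (r (inv g \<otimes> t))) X)"
proof (rule lin_eqI[OF lin_comp[OF lin_pD lin_act] lin_comp[OF lin_act lin_pD] assms(1)])
  fix \<sigma> assume "X \<sigma> \<noteq> 0"
  then have G: "Gl \<sigma>" using assms by (auto simp: onP_def)
  have m: "map (\<alpha> t) (map ((\<otimes>) g) \<sigma>) = map ((\<otimes>) g) (map (\<alpha> (r (inv g \<otimes> t))) \<sigma>)"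
    using G assms by (auto simp: \<alpha>_shift)
  have l: "take (Suc i) (map (\<alpha> t) (map ((\<otimes>) g) \<sigma>)) @ drop i (map ((\<otimes>) g) \<sigma>) =
      map ((\<otimes>) g) (take (Suc i) (map (\<alpha> (r (inv g \<otimes> t))) \<sigma>) @ drop i \<sigma>)" for i
    by (simp only: m map_append take_map drop_map)
  have "pgen (\<alpha> t) (map ((\<otimes>) g) \<sigma>) (\<rho> g v) = act g (pgen (\<alpha> (r (inv g \<otimes> t))) \<sigma> v)" for v
    unfolding pgen_def using assms
    by (simp add: lin_sum[OF lin_act] act_single rho_sg l del: map_map)
  then show "pD (\<alpha> t) (act g (single \<sigma> (X \<sigma>))) = act g (pD (\<alpha> (r (inv g \<otimes> t))) (single \<sigma> (X \<sigma>)))"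
    using assms by (simp add: act_single pD_single)
qed

lemma pr_th_act: assumes "fs X" "onP Gl X" "g \<in> carrier G" shows "pr (th (act g X)) = pr (th X)"
proof -
  have "pr (th (act g X)) = (\<Sum>t\<in>T. pr (mapc (\<alpha> t) (act g X)))"
    unfolding th_def using assms by (simp add: lin_sum[OF lin_pr])
  also have "\<dots> = (\<Sum>t\<in>T. pr (mapc (\<alpha> (r (inv g \<otimes> t))) X))"
    using assms by (intro sum.cong refl) (simp add: mapc_act T_carrier pr_act onP_Gl_mapc)
  also have "\<dots> = (\<Sum>t\<in>T. pr (mapc (\<alpha> t) X))"
    by (rule T_reindex[OF assms(3), of "\<lambda>t. pr (mapc (\<alpha> t) X)"])
  also have "\<dots> = pr (th X)" unfolding th_def using assms by (simp add: lin_sum[OF lin_pr])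
  finally show ?thesis .
qed

lemma onP_Gl_pD: "fs X \<Longrightarrow> onP Gl X \<Longrightarrow> t \<in> carrier G \<Longrightarrow> onP Gl (pD (\<alpha> t) X)"
  by (rule onP_pD[where P=Gl]) (auto simp: subset_iff dest!: in_set_takeD in_set_dropD)

lemma pr_DD_act: assumes "fs X" "onP Gl X" "g \<in> carrier G" shows "pr (DD (act g X)) = pr (DD X)"
proof -
  have "pr (DD (act g X)) = (\<Sum>t\<in>T. pr (pD (\<alpha> t) (act g X)))"
    unfolding DD_def using assms by (simp add: lin_sum[OF lin_pr])
  also have "\<dots> = (\<Sum>t\<in>T. pr (pD (\<alpha> (r (inv g \<otimes> t))) X))"
    using assms by (intro sum.cong refl) (simp add: pD_act T_carrier pr_act onP_Gl_pD)
  also have "\<dots> = (\<Sum>t\<in>T. pr (pD (\<alpha> t) X))"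
    by (rule T_reindex[OF assms(3), of "\<lambda>t. pr (pD (\<alpha> t) X)"])
  also have "\<dots> = pr (DD X)" unfolding DD_def using assms by (simp add: lin_sum[OF lin_pr])
  finally show ?thesis .
qed

lemma sec_prgen: "Gl x \<Longrightarrow> x \<noteq> [] \<Longrightarrow> sec (prgen x v) = act (inv (hd x)) (single x v)"
proof (cases x)
  case (Cons b rest)
  assume G: "Gl x"
  have "pp \<one> (quots (b # rest)) = map ((\<otimes>) (inv b)) (b # rest)"
    using pp_quots[of \<one> b rest] G Cons by (simp add: subset_iff)
  then show ?thesis using G Cons by (simp add: prgen_def sec_single act_single)
qed simp

lemma inv_pr:
  assumes L: "lin L" and invL: "\<And>X g. fs X \<Longrightarrow> onP Gl X \<Longrightarrow> g \<in> carrier G \<Longrightarrow> pr (L (act g X)) = pr (L X)"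
    and nil: "\<And>v. pr (L (single [] v)) = 0"
    and X: "fs X" "onP Gl X"
  shows "pr (L (sec (pr X))) = pr (L X)"
proof (rule lin_eqI[OF lin_comp[OF lin_pr lin_comp[OF L lin_comp[OF lin_sec lin_pr]]] lin_comp[OF lin_pr L] X(1)])
  fix \<sigma> assume "X \<sigma> \<noteq> 0"
  then have G: "Gl \<sigma>" using X by (auto simp: onP_def)
  show "pr (L (sec (pr (single \<sigma> (X \<sigma>))))) = pr (L (single \<sigma> (X \<sigma>)))"
  proof (cases "\<sigma> = []")
    case True
    then show ?thesis using nil by (simp add: pr_single prgen_def lin_zero[OF lin_sec] lin_zero[OF L] lin_zero[OF lin_pr])
  next
    case False
    then have "hd \<sigma> \<in> carrier G" using G by (cases \<sigma>) auto
    moreover have "onP Gl (single \<sigma> (X \<sigma>))" using G by (rule onP_single)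
    ultimately show ?thesis using G False invL[of "single \<sigma> (X \<sigma>)" "inv (hd \<sigma>)"]
      by (simp add: pr_single sec_prgen)
  qed
qed

lemma pr_th_inv: "fs X \<Longrightarrow> onP Gl X \<Longrightarrow> pr (th (sec (pr X))) = pr (th X)"
  by (rule inv_pr[OF lin_th pr_th_act]) (simp_all add: th_single lin_sum[OF lin_pr] pr_single prgen_def)

lemma pr_zero': "pr (\<lambda>a. 0) = 0" using lin_zero[OF lin_pr] by (simp add: zero_fun_def)

lemma pr_DD_inv: "fs X \<Longrightarrow> onP Gl X \<Longrightarrow> pr (DD (sec (pr X))) = pr (DD X)"
  by (rule inv_pr[OF lin_DD pr_DD_act]) (simp_all add: DD_def pD_single lin_zero[OF lin_pr] pr_zero')

end



context hsetup begin

lemma pr_sec: assumes "fs w" "onP Gl w" shows "pr (sec w) = w"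
proof -
  have "pr (sec w) = (\<lambda>c. c) w"
  proof (rule lin_eqI[OF lin_comp[OF lin_pr lin_sec] lin_id assms(1)])
    fix \<sigma> assume "w \<sigma> \<noteq> 0"
    then have "Gl \<sigma>" using assms by (simp add: onP_def)
    then show "pr (sec (single \<sigma> (w \<sigma>))) = single \<sigma> (w \<sigma>)"
      by (simp add: sec_single pr_single prgen_def pp_Gl quots_pp)
  qed
  then show ?thesis by simp
qed

lemma hbd_th: "fs Y \<Longrightarrow> hbd (th Y) = th (hbd Y)"
  unfolding th_def by (simp add: lin_sum[OF lin_hbd] hbd_mapc)

lemma onP_Gl_hbd: "fs Y \<Longrightarrow> onP Gl Y \<Longrightarrow> onP Gl (hbd Y)"
  by (rule onP_hbd[where P=Gl]) (auto dest!: in_set_takeD in_set_dropD)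

lemma onP_Gl_sec: "fs Y \<Longrightarrow> onP Gl Y \<Longrightarrow> onP Gl (sec Y)"
  by (rule onP_sec[where P=Gl]) (auto simp: pp_Gl)

lemma tr_chain: assumes "fs w" "onP Gl w" shows "bbd (tr w) = tr (bbd w)"
proof -
  have S: "fs (sec w)" "onP Gl (sec w)" using assms by (simp_all add: onP_Gl_sec)
  have "bbd (tr w) = pr (hbd (th (sec w)))"
    unfolding tr_def using S by (simp add: chain_map onP_Gl_th)
  also have "\<dots> = pr (th (hbd (sec w)))" using S by (simp add: hbd_th)
  also have "\<dots> = pr (th (sec (pr (hbd (sec w)))))"
    using S by (simp add: pr_th_inv onP_Gl_hbd)
  also have "pr (hbd (sec w)) = bbd w"
    using S assms by (simp add: chain_map[symmetric] pr_sec)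
  finally show ?thesis by (simp add: tr_def)
qed

lemma homotopy_DD: "fs Z \<Longrightarrow> hbd (DD Z) + DD (hbd Z) = (\<Sum>t\<in>T. Z) - th Z"
  unfolding DD_def th_def
  by (simp add: lin_sum[OF lin_hbd] homotopy sum.distrib[symmetric] sum_subtractf[symmetric])

lemma key:
  assumes "fs z" "onP Gl z" "bbd z = 0"
  shows "bbd (pr (DD (sec z))) = (\<Sum>t\<in>T. z) - tr z"
proof -
  define Z where "Z = sec z"
  have S: "fs Z" "onP Gl Z" using assms by (simp_all add: onP_Gl_sec Z_def)
  have DG: "onP Gl (DD Z)"
    by (rule onP_DD[where P=Gl, OF S]) (auto simp: subset_iff T_carrier dest!: in_set_takeD in_set_dropD)
  have "pr (hbd (DD Z) + DD (hbd Z)) = pr ((\<Sum>t\<in>T. Z) - th Z)" using homotopy_DD[OF S(1)] by simp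
  then have "pr (hbd (DD Z)) + pr (DD (hbd Z)) = (\<Sum>t\<in>T. pr Z) - pr (th Z)"
    using S by (simp add: lin_add[OF lin_pr] lin_diff[OF lin_pr] lin_sum[OF lin_pr])
  moreover have "pr (hbd (DD Z)) = bbd (pr (DD Z))" using S DG by (simp add: chain_map)
  moreover have "pr (DD (hbd Z)) = 0"
  proof -
    have "pr (DD (hbd Z)) = pr (DD (sec (pr (hbd Z))))" using S by (simp add: pr_DD_inv onP_Gl_hbd)
    also have "pr (hbd Z) = bbd (pr Z)" using S by (simp add: chain_map)
    also have "pr Z = z" using assms by (simp add: Z_def pr_sec)
    finally show ?thesis using assms(3) by (metis lin_zero[OF lin_sec] lin_zero[OF lin_DD] lin_zero[OF lin_pr])
  qed
  moreover have "pr Z = z" using assms by (simp add: Z_def pr_sec)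
  moreover have "pr (th Z) = tr z" by (simp add: tr_def Z_def)
  ultimately show ?thesis by (simp add: Z_def)
qed

definition A :: "'v \<Rightarrow> 'v" where "A v = (\<Sum>t\<in>T. \<rho> (r (inv t)) v)"

lemma quots_H: "(\<forall>a\<in>set x. \<forall>b\<in>set x. inv a \<otimes> b \<in> H) \<Longrightarrow> set (quots x) \<subseteq> H"
  by (induction x rule: quots.induct) auto

lemma tr_H: assumes "fs z" "onP (\<lambda>\<sigma>. set \<sigma> \<subseteq> H) z" shows "tr z = (\<lambda>\<sigma>. A (z \<sigma>))"
proof (rule lin_eqI[OF lin_tr _ assms(1)])
  show "lin (\<lambda>c \<sigma>. A (c \<sigma>))"
    by (rule lin_pointwise) (simp add: A_def rho_add T_carrier sum.distrib)
  fix \<sigma> assume "z \<sigma> \<noteq> 0"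
  then have Hs: "set \<sigma> \<subseteq> H" using assms by (simp add: onP_def)
  then have Gs: "Gl \<sigma>" using H_sub by blast
  have ppH: "set (pp \<one> \<sigma>) \<subseteq> H" using pp_H[OF Hone Hs] .
  have ppG: "Gl (pp \<one> \<sigma>)" using ppH H_sub by blast
  have tm: "prgen (map (\<alpha> t) (pp \<one> \<sigma>)) v = single \<sigma> (\<rho> (r (inv t)) v)" if t: "t \<in> T" for t v
  proof -
    have tc: "t \<in> carrier G" using T_carrier t by simp
    define c where "c = inv (r (inv t))"
    have c: "c \<in> carrier G" using tc by (simp add: c_def)
    have m: "map (\<alpha> t) (pp \<one> \<sigma>) = map (\<lambda>y. y \<otimes> c) (pp \<one> \<sigma>)"
      using ppH tc by (auto simp: \<alpha>_H c_def)
    have q: "quots (map (\<lambda>y. y \<otimes> c) (pp \<one> \<sigma>)) = \<sigma>"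
      using quots_map_right[OF c ppG] quots_pp[OF one_closed Gs] by simp
    have h: "hd (map (\<lambda>y. y \<otimes> c) (pp \<one> \<sigma>)) = c" using c by (simp add: hd_map)
    have "inv c = r (inv t)" using tc by (simp add: c_def)
    moreover have "Gl (map (\<lambda>y. y \<otimes> c) (pp \<one> \<sigma>))" using ppG c by auto
    moreover have "map (\<lambda>y. y \<otimes> c) (pp \<one> \<sigma>) \<noteq> []" by simp
    ultimately show ?thesis unfolding m prgen_def using q h by simp
  qed
  have "tr (single \<sigma> (z \<sigma>)) = (\<Sum>t\<in>T. pr (single (map (\<alpha> t) (pp \<one> \<sigma>)) (z \<sigma>)))"
    by (simp add: tr_def sec_single th_single lin_sum[OF lin_pr])
  also have "\<dots> = (\<Sum>t\<in>T. single \<sigma> (\<rho> (r (inv t)) (z \<sigma>)))"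
    by (rule sum.cong) (simp_all add: pr_single tm)
  also have "\<dots> = single \<sigma> (A (z \<sigma>))" by (simp add: A_def single_sum)
  also have "\<dots> = (\<lambda>\<tau>. A (single \<sigma> (z \<sigma>) \<tau>))"
    by (rule ext) (simp add: single_def A_def rho_zero T_carrier)
  finally show "tr (single \<sigma> (z \<sigma>)) = (\<lambda>\<tau>. A (single \<sigma> (z \<sigma>) \<tau>))" .
qed

lemma onP_tr: assumes "fs z" "onP (\<lambda>\<sigma>. length \<sigma> = k \<and> Gl \<sigma>) z"
  shows "onP (\<lambda>\<sigma>. length \<sigma> = k \<and> set \<sigma> \<subseteq> H) (tr z)"
proof -
  let ?P1 = "\<lambda>\<sigma>. length \<sigma> = Suc k \<and> Gl \<sigma>"
  let ?P2 = "\<lambda>x. \<exists>y t. t \<in> T \<and> ?P1 y \<and> x = map (\<alpha> t) y"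
  have s: "onP ?P1 (sec z)" by (rule onP_sec[OF assms]) (simp add: pp_Gl)
  have th: "onP ?P2 (th (sec z))" unfolding th_def
  proof (rule onP_sum)
    fix t assume t: "t \<in> T"
    show "onP ?P2 (mapc (\<alpha> t) (sec z))"
    proof (rule onP_lin[OF lin_mapc fs_sec[OF assms(1)]])
      fix \<sigma> assume "sec z \<sigma> \<noteq> 0"
      then have "?P1 \<sigma>" using s by (simp add: onP_def)
      then show "onP ?P2 (mapc (\<alpha> t) (single \<sigma> (sec z \<sigma>)))"
        using t by (auto simp: mapc_single intro!: onP_single)
    qed
  qed
  show ?thesis unfolding tr_def
  proof (rule onP_pr[OF _ th])
    show "fs (th (sec z))" using assms by simp
    fix x assume "?P2 x"
    then obtain y t where y: "t \<in> T" "?P1 y" "x = map (\<alpha> t) y" by blast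
    have tc: "t \<in> carrier G" using y T_carrier by simp
    have "set (quots x) \<subseteq> H" using y tc
      by (intro quots_H) (auto simp: subset_iff intro!: quot_\<alpha>_H)
    then show "length (quots x) = k \<and> set (quots x) \<subseteq> H" using y by simp
  qed
qed

lemma onP_D: assumes "fs z" "onP (\<lambda>\<sigma>. length \<sigma> = k \<and> Gl \<sigma>) z"
  shows "onP (\<lambda>\<sigma>. length \<sigma> = Suc k \<and> Gl \<sigma>) (pr (DD (sec z)))"
proof -
  have s: "onP (\<lambda>\<sigma>. length \<sigma> = Suc k \<and> Gl \<sigma>) (sec z)" by (rule onP_sec[OF assms]) (simp add: pp_Gl)
  have d: "onP (\<lambda>\<sigma>. length \<sigma> = Suc (Suc k) \<and> Gl \<sigma>) (DD (sec z))"
    by (rule onP_DD[OF _ s]) (use assms in \<open>auto simp: subset_iff T_carrier dest!: in_set_takeD in_set_dropD\<close>)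
  show ?thesis by (rule onP_pr[OF _ d]) (use assms in \<open>auto simp: quots_Gl\<close>)
qed

end



section \<open>Nilpotent operators\<close>

definition addv :: "('v::ab_group_add \<Rightarrow> 'v) \<Rightarrow> bool" where
  "addv f \<longleftrightarrow> (\<forall>x y. f (x + y) = f x + f y)"

lemma addv_zero: "addv f \<Longrightarrow> f 0 = 0"
  unfolding addv_def by (metis add_cancel_right_right add_0)

lemma addv_sum: "addv f \<Longrightarrow> f (\<Sum>i\<in>I. g i) = (\<Sum>i\<in>I. f (g i))"
  by (induction I rule: infinite_finite_induct) (auto simp: addv_zero addv_def)

lemma addv_pow: "addv f \<Longrightarrow> addv (f ^^ n)"
  by (induction n) (auto simp: addv_def)

lemma addv_pow_zero: "addv f \<Longrightarrow> (f ^^ n) 0 = 0"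
  using addv_zero[OF addv_pow] by blast

lemma nil_add:
  fixes a b :: "'v::ab_group_add \<Rightarrow> 'v"
  assumes aa: "addv a" and ab: "addv b" and cm: "\<And>x. a (b x) = b (a x)"
    and na: "a ^^ p = (\<lambda>v. 0)" and nb: "b ^^ q = (\<lambda>v. 0)"
  shows "(\<lambda>v. a v + b v) ^^ (p + q) = (\<lambda>v. 0)"
proof -
  define F where "F = (\<lambda>v. a v + b v)"
  have aF: "addv F" using aa ab by (auto simp: addv_def F_def algebra_simps)
  have cp: "(a ^^ i) (b x) = b ((a ^^ i) x)" for i x by (induction i) (auto simp: cm)
  have za: "(a ^^ i) y = 0" if "p \<le> i" for i y
  proof -
    have "a ^^ i = (a ^^ (i - p)) \<circ> (a ^^ p)" using that by (simp add: funpow_add[symmetric])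
    then show ?thesis using na addv_pow_zero[OF aa] by simp
  qed
  have zb: "(b ^^ j) y = 0" if "q \<le> j" for j y
  proof -
    have "b ^^ j = (b ^^ (j - q)) \<circ> (b ^^ q)" using that by (simp add: funpow_add[symmetric])
    then show ?thesis using nb addv_pow_zero[OF ab] by simp
  qed
  have claim: "\<forall>i j x. p + q \<le> n + i + j \<longrightarrow> (F ^^ n) ((a ^^ i) ((b ^^ j) x)) = 0" for n
  proof (induction n)
    case 0
    show ?case
    proof (intro allI impI)
      fix i j x assume "p + q \<le> 0 + i + j"
      then have "p \<le> i \<or> q \<le> j" by linarith
      then show "(F ^^ 0) ((a ^^ i) ((b ^^ j) x)) = 0"
        using za zb addv_pow_zero[OF aa] by auto
    qed
  next
    case (Suc n)
    show ?case
    proof (intro allI impI)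
      fix i j x assume le: "p + q \<le> Suc n + i + j"
      have l1: "p + q \<le> n + Suc i + j" "p + q \<le> n + i + Suc j" using le by simp_all
      have e1: "(F ^^ n) ((a ^^ Suc i) ((b ^^ j) x)) = 0" using Suc.IH l1(1) by blast
      have e2: "(F ^^ n) ((a ^^ i) ((b ^^ Suc j) x)) = 0" using Suc.IH l1(2) by blast
      have "F ((a ^^ i) ((b ^^ j) x)) = (a ^^ Suc i) ((b ^^ j) x) + (a ^^ i) ((b ^^ Suc j) x)"
        by (simp add: F_def cp)
      then have "(F ^^ Suc n) ((a ^^ i) ((b ^^ j) x)) =
          (F ^^ n) ((a ^^ Suc i) ((b ^^ j) x)) + (F ^^ n) ((a ^^ i) ((b ^^ Suc j) x))"
        using addv_pow[OF aF, of n] by (simp add: funpow_Suc_right addv_def del: funpow.simps)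
      also have "\<dots> = 0" by (simp only: e1 e2 add_0)
      finally show "(F ^^ Suc n) ((a ^^ i) ((b ^^ j) x)) = 0" .
    qed
  qed
  show ?thesis
  proof (rule ext)
    fix v show "((\<lambda>v. a v + b v) ^^ (p + q)) v = 0"
      using claim[of "p + q", rule_format, of 0 0 v] by (simp add: F_def)
  qed
qed

lemma nil_sum:
  fixes f :: "'t \<Rightarrow> 'v::ab_group_add \<Rightarrow> 'v"
  assumes "finite T"
    and "\<And>t. t \<in> T \<Longrightarrow> addv (f t)"
    and "\<And>t. t \<in> T \<Longrightarrow> \<exists>m. f t ^^ m = (\<lambda>v. 0)"
    and "\<And>s t x. s \<in> T \<Longrightarrow> t \<in> T \<Longrightarrow> f s (f t x) = f t (f s x)"
  shows "\<exists>m. (\<lambda>v. \<Sum>t\<in>T. f t v) ^^ m = (\<lambda>v. 0)"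
  using assms
proof (induction T rule: finite_induct)
  case empty
  show ?case by (rule exI[of _ 1]) simp
next
  case (insert t T)
  define S where "S = (\<lambda>v. \<Sum>s\<in>T. f s v)"
  have aS: "addv S" using insert.prems by (auto simp: addv_def S_def sum.distrib)
  obtain q where q: "S ^^ q = (\<lambda>v. 0)" using insert by (auto simp: S_def)
  obtain p where p: "f t ^^ p = (\<lambda>v. 0)" using insert.prems by blast
  have at: "addv (f t)" using insert.prems by blast
  have cm: "f t (S x) = S (f t x)" for x
    unfolding S_def using insert.prems by (simp add: addv_sum[OF at])
  have "(\<lambda>v. f t v + S v) ^^ (p + q) = (\<lambda>v. 0)" by (rule nil_add[OF at aS cm p q])
  moreover have "(\<lambda>v. \<Sum>s\<in>insert t T. f s v) = (\<lambda>v. f t v + S v)"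
    using insert.hyps by (simp add: S_def)
  ultimately show ?case by metis
qed

context hsetup begin

lemma bbd_comp:
  assumes fa: "\<And>a b. f (a + b) = f a + f b" and fc: "\<And>g v. g \<in> carrier G \<Longrightarrow> f (\<rho> g v) = \<rho> g (f v)"
    and d: "fs d" "onP Gl d"
  shows "bbd (\<lambda>\<sigma>. f (d \<sigma>)) = (\<lambda>\<sigma>. f (bbd d \<sigma>))"
proof -
  have f0: "f 0 = 0" using fa by (metis add_cancel_right_right add_0)
  have fneg: "f (- a) = - f a" for a using fa[of a "-a"] f0 by (simp add: eq_neg_iff_add_eq_0 add.commute)
  have fsum: "f (\<Sum>i\<in>I. g i) = (\<Sum>i\<in>I. f (g i))" for I and g :: "nat \<Rightarrow> 'v"
    by (induction I rule: infinite_finite_induct) (auto simp: f0 fa)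
  have l1: "lin (\<lambda>c \<sigma>. f (c \<sigma>))" by (rule lin_pointwise[OF fa])
  show ?thesis
  proof (rule lin_eqI[OF lin_comp[OF lin_bbd l1] lin_comp[OF l1 lin_bbd] d(1)])
    fix \<sigma> assume "d \<sigma> \<noteq> 0"
    then have G: "Gl \<sigma>" using d by (simp add: onP_def)
    define v where "v = d \<sigma>"
    have s: "(\<lambda>\<tau>. f (single \<sigma> v \<tau>)) = single \<sigma> (f v)" by (rule ext) (simp add: single_def f0)
    have "bgen \<sigma> (f v) = (\<lambda>\<tau>. f (bgen \<sigma> v \<tau>))"
    proof (cases "\<sigma> \<noteq> [] \<and> Gl \<sigma>")
      case True
      then have c: "\<sigma> ! 0 \<in> carrier G" by (cases \<sigma>) auto
      define Y where "Y = (\<lambda>(i::nat) w. let x = (if i = 0 then \<rho> (inv (\<sigma> ! 0)) w else w) in if even i then x else - x)"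
      have X: "f (Y i w) = Y i (f w)" for i w
        by (simp add: Y_def Let_def fneg fc[OF inv_closed[OF c]])
      have bg: "bgen \<sigma> w = (\<Sum>i\<in>{0..length \<sigma>}. single (bar_face G i \<sigma>) (Y i w))" for w
        using True by (simp add: bgen_def Y_def)
      have Ys: "f (single (\<sigma>'::'g list) (Y i v) \<tau>) = single \<sigma>' (Y i (f v)) \<tau>" for \<sigma>' \<tau> i
        by (simp add: single_def X f0)
      show ?thesis
        by (rule ext) (simp add: bg sum_apply fsum Ys)
    qed (auto simp: bgen_def f0)
    then show "bbd (\<lambda>\<tau>. f (single \<sigma> (d \<sigma>) \<tau>)) = (\<lambda>\<tau>. f (bbd (single \<sigma> (d \<sigma>)) \<tau>))"
      unfolding v_def[symmetric] s by (simp add: bbd_single)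
  qed
qed

end



lemma hchain_iff: "hchain S k c \<longleftrightarrow> fs c \<and> onP (\<lambda>\<sigma>. length \<sigma> = k \<and> set \<sigma> \<subseteq> S) c"
  by (auto simp: hchain_def fs_def supp_def onP_def)

lemma onP_comp: "f 0 = 0 \<Longrightarrow> onP P c \<Longrightarrow> onP P (\<lambda>\<sigma>. f (c \<sigma>))"
  unfolding onP_def by metis

theorem lemma12p4:
  fixes G :: "('g, 'b) monoid_scheme"
    and scale :: "'k::field_char_0 \<Rightarrow> 'v::ab_group_add \<Rightarrow> 'v"
    and basis :: "'v set"
    and \<rho> :: "'g \<Rightarrow> 'v \<Rightarrow> 'v"
    and H :: "'g set"
  assumes "comm_group G"
    and "finite_dimensional_vector_space scale basis"
    and "\<forall>g\<in>carrier G. Vector_Spaces.linear scale scale (\<rho> g)"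
    and "\<forall>g\<in>carrier G. \<forall>h\<in>carrier G. \<rho> (g \<otimes>\<^bsub>G\<^esub> h) = \<rho> g \<circ> \<rho> h"
    and "\<rho> \<one>\<^bsub>G\<^esub> = id"
    and "\<forall>g\<in>carrier G. \<exists>m. ((\<lambda>v. \<rho> g v - v) ^^ m) = (\<lambda>v. 0)"
    and "subgroup H G"
    and "finite (rcosets\<^bsub>G\<^esub> H)"
  shows "\<forall>k. inclusion_induces_iso_Hk G \<rho> H k TYPE('v)"
proof -
  have vs: "vector_space scale" using assms(2) by (rule finite_dimensional_vector_space.axioms(1))
  have md: "module scale" using vs by (simp add: module_iff_vector_space)
  have mh: "module_hom scale scale (\<rho> g)" if "g \<in> carrier G" for g
    using assms(3) that by (simp add: module_hom_iff_linear)
  have hs: "hsetup G \<rho> H"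
    unfolding hsetup_def hsetup_axioms_def
    using assms(1,4,5,7,8) module_hom.add[OF mh] by auto
  interpret hsetup G \<rho> H by (rule hs)
  define c :: 'k where "c = inverse (of_nat (card T))"
  have cne: "(of_nat (card T) :: 'k) \<noteq> 0" using card_T by simp
  have cn: "scale c (\<Sum>t\<in>T. x) = x" for x
    using cne by (simp add: module.sum_constant_scale[OF md] module.scale_scale[OF md] c_def module.scale_one[OF md])
  have sc_add: "scale c (a + b) = scale c a + scale c b" for a b by (rule module.scale_right_distrib[OF md])
  have sc_comm: "g \<in> carrier G \<Longrightarrow> scale c (\<rho> g v) = \<rho> g (scale c v)" for g v
    by (simp add: module_hom.scale[OF mh])
  have sc0: "scale c 0 = 0" by (rule module.scale_zero_right[OF md])
  have rho_diff: "g \<in> carrier G \<Longrightarrow> \<rho> g (a - b) = \<rho> g a - \<rho> g b" for g a b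
    by (rule module_hom.diff[OF mh])

  show ?thesis
  proof (intro allI)
    fix k
    let ?B = "hboundary G \<rho> H k"
    have z0: "(\<lambda>\<sigma>::'g list. 0::'v) = 0" by (simp add: zero_fun_def)
    have e0: "bar_bd G \<rho> (Suc k) 0 = 0"
      using bar_bd_eq[OF fs_zero onP_zero, of "Suc k"] lin_zero[OF lin_bbd] by metis
    have B0: "?B (\<lambda>\<sigma>. 0)"
      unfolding hboundary_def z0 by (rule exI[of _ 0]) (simp add: hchain_iff e0)
    have cl1: "?B (\<lambda>\<sigma>. f (x \<sigma>))"
      if Bx: "?B x" and fa: "\<And>a b. f (a + b) = f a + f b"
        and fc: "\<And>g v. g \<in> carrier G \<Longrightarrow> f (\<rho> g v) = \<rho> g (f v)" for x f
    proof -
      have f0: "f 0 = 0" using fa by (metis add_cancel_right_right add_0)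
      obtain d where d: "hchain H (Suc k) d" "bar_bd G \<rho> (Suc k) d = x" using Bx by (auto simp: hboundary_def)
      have fd: "fs d" and od: "onP (\<lambda>\<sigma>. length \<sigma> = Suc k \<and> set \<sigma> \<subseteq> H) d" using d by (auto simp: hchain_iff)
      have odG: "onP (\<lambda>\<sigma>. length \<sigma> = Suc k \<and> Gl \<sigma>) d" by (rule onP_mono[OF od]) (use H_sub in auto)
      have odG': "onP Gl d" by (rule onP_mono[OF od]) (use H_sub in auto)
      have xb: "x = bbd d" using d bar_bd_eq[OF fd odG] by simp
      have fs': "fs (\<lambda>\<sigma>. f (d \<sigma>))" using fd f0 by (simp add: fs_comp)
      have "hchain H (Suc k) (\<lambda>\<sigma>. f (d \<sigma>))" using fs' onP_comp[of f, OF f0 od] by (simp add: hchain_iff)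
      moreover have "bar_bd G \<rho> (Suc k) (\<lambda>\<sigma>. f (d \<sigma>)) = (\<lambda>\<sigma>. f (x \<sigma>))"
        using bar_bd_eq[OF fs' onP_comp[of f, OF f0 odG]] bbd_comp[OF fa fc fd odG'] xb by simp
      ultimately show ?thesis unfolding hboundary_def by blast
    qed
    have cl2: "?B (x1 - x2)" if Bx1: "?B x1" and Bx2: "?B x2" for x1 x2
    proof -
      obtain d1 where d1: "hchain H (Suc k) d1" "bar_bd G \<rho> (Suc k) d1 = x1" using Bx1 unfolding hboundary_def by blast
      obtain d2 where d2: "hchain H (Suc k) d2" "bar_bd G \<rho> (Suc k) d2 = x2" using Bx2 unfolding hboundary_def by blast
      let ?P = "\<lambda>\<sigma>. length \<sigma> = Suc k \<and> set \<sigma> \<subseteq> H"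
      have f1: "fs d1" "onP ?P d1" and f2: "fs d2" "onP ?P d2" using d1 d2 by (auto simp: hchain_iff)
      have oP: "onP ?P (d1 - d2)" using onP_add[OF f1(2) onP_uminus[OF f2(2)]] by (metis diff_conv_add_uminus)
      have mono: "onP ?P e \<Longrightarrow> onP (\<lambda>\<sigma>. length \<sigma> = Suc k \<and> Gl \<sigma>) e" for e
        by (erule onP_mono) (use H_sub in auto)
      have "bar_bd G \<rho> (Suc k) (d1 - d2) = bbd (d1 - d2)" using bar_bd_eq[OF fs_diff[OF f1(1) f2(1)] mono[OF oP]] .
      also have "\<dots> = bbd d1 - bbd d2" using lin_diff[OF lin_bbd f1(1) f2(1)] .
      also have "\<dots> = x1 - x2" using d1 d2 bar_bd_eq[OF f1(1) mono[OF f1(2)]] bar_bd_eq[OF f2(1) mono[OF f2(2)]] by simp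
      finally show ?thesis unfolding hboundary_def hchain_iff using oP fs_diff[OF f1(1) f2(1)] by blast
    qed

    show "inclusion_induces_iso_Hk G \<rho> H k TYPE('v)"
      unfolding inclusion_induces_iso_Hk_def
    proof (intro conjI allI impI)
      fix z :: "'g list \<Rightarrow> 'v"
      assume zc: "hcycle G \<rho> (carrier G) k z"
      have fz: "fs z" and oz: "onP (\<lambda>\<sigma>. length \<sigma> = k \<and> Gl \<sigma>) z"
        using zc by (auto simp: hcycle_def hchain_iff)
      have ozG: "onP Gl z" by (rule onP_mono[OF oz]) auto
      have bz: "bbd z = 0" using zc bar_bd_eq[OF fz oz] by (simp add: hcycle_def zero_fun_def)
      define z' where "z' = (\<lambda>\<sigma>. scale c (tr z \<sigma>))"
      have otr: "onP (\<lambda>\<sigma>. length \<sigma> = k \<and> set \<sigma> \<subseteq> H) (tr z)" by (rule onP_tr[OF fz oz])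
      have otrG: "onP Gl (tr z)" by (rule onP_mono[OF otr]) (use H_sub in auto)
      have fz': "fs z'" unfolding z'_def using fz sc0 by (simp add: fs_comp)
      have oz': "onP (\<lambda>\<sigma>. length \<sigma> = k \<and> set \<sigma> \<subseteq> H) z'" unfolding z'_def by (rule onP_comp[of "scale c", OF sc0 otr])
      have oz'G: "onP (\<lambda>\<sigma>. length \<sigma> = k \<and> Gl \<sigma>) z'" by (rule onP_mono[OF oz']) (use H_sub in auto)
      have "bar_bd G \<rho> k z' = bbd z'" by (rule bar_bd_eq[OF fz' oz'G])
      also have "\<dots> = (\<lambda>\<sigma>. scale c (bbd (tr z) \<sigma>))"
        unfolding z'_def by (rule bbd_comp[OF sc_add sc_comm fs_tr[OF fz] otrG])
      also have "bbd (tr z) = 0" using tr_chain[OF fz ozG] bz lin_zero[OF lin_tr] by simp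
      finally have cyc: "hcycle G \<rho> H k z'" using fz' oz' sc0 by (simp add: hcycle_def hchain_iff)
      define d where "d = (\<lambda>\<sigma>. - scale c (pr (DD (sec z)) \<sigma>))"
      have na: "- scale c (a + b) = - scale c a + - scale c b" for a b by (simp add: sc_add)
      have nc: "g \<in> carrier G \<Longrightarrow> - scale c (\<rho> g v) = \<rho> g (- scale c v)" for g v by (simp add: sc_comm rho_uminus)
      have n0: "- scale c 0 = 0" using sc0 by simp
      have oD: "onP (\<lambda>\<sigma>. length \<sigma> = Suc k \<and> Gl \<sigma>) (pr (DD (sec z)))" by (rule onP_D[OF fz oz])
      have oDG: "onP Gl (pr (DD (sec z)))" by (rule onP_mono[OF oD]) auto
      have fD: "fs (pr (DD (sec z)))" using fz by simp
      have fd: "fs d" unfolding d_def using fD n0 fs_comp[of _ "\<lambda>v. - scale c v"] by blast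
      have od: "onP (\<lambda>\<sigma>. length \<sigma> = Suc k \<and> Gl \<sigma>) d" unfolding d_def by (rule onP_comp[of "\<lambda>v. - scale c v", OF n0 oD])
      have "bar_bd G \<rho> (Suc k) d = bbd d" by (rule bar_bd_eq[OF fd od])
      also have "\<dots> = (\<lambda>\<sigma>. - scale c (bbd (pr (DD (sec z))) \<sigma>))"
        unfolding d_def by (rule bbd_comp[OF na nc fD oDG])
      also have "\<dots> = (\<lambda>\<sigma>. - scale c ((\<Sum>t\<in>T. z \<sigma>) - tr z \<sigma>))"
        using key[OF fz ozG bz] by (simp add: sum_apply)
      also have "\<dots> = z' - z"
        by (rule ext) (simp add: z'_def cn module.scale_right_diff_distrib[OF md])
      finally have "hboundary G \<rho> (carrier G) k (z' - z)"
        unfolding hboundary_def using fd od by (auto simp: hchain_iff)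
      then show "\<exists>z'. hcycle G \<rho> H k z' \<and> hboundary G \<rho> (carrier G) k (z' - z)" using cyc by blast
    next
      fix z' :: "'g list \<Rightarrow> 'v"
      assume a: "hcycle G \<rho> H k z' \<and> hboundary G \<rho> (carrier G) k z'"
      obtain w where w: "hchain (carrier G) (Suc k) w" "bar_bd G \<rho> (Suc k) w = z'"
        using a by (auto simp: hboundary_def)
      have fw: "fs w" and ow: "onP (\<lambda>\<sigma>. length \<sigma> = Suc k \<and> Gl \<sigma>) w" using w by (auto simp: hchain_iff)
      have owG: "onP Gl w" by (rule onP_mono[OF ow]) auto
      have zw: "z' = bbd w" using w bar_bd_eq[OF fw ow] by simp
      have fz': "fs z'" and oz': "onP (\<lambda>\<sigma>. length \<sigma> = k \<and> set \<sigma> \<subseteq> H) z'"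
        using a by (auto simp: hcycle_def hchain_iff)
      have oz'H: "onP (\<lambda>\<sigma>. set \<sigma> \<subseteq> H) z'" by (rule onP_mono[OF oz']) auto
      have BA: "?B (\<lambda>\<sigma>. A (z' \<sigma>))"
      proof -
        have "(\<lambda>\<sigma>. A (z' \<sigma>)) = tr z'" using tr_H[OF fz' oz'H] by simp
        also have "\<dots> = bbd (tr w)" using zw tr_chain[OF fw owG] by simp
        finally have e: "(\<lambda>\<sigma>. A (z' \<sigma>)) = bbd (tr w)" .
        have otw: "onP (\<lambda>\<sigma>. length \<sigma> = Suc k \<and> set \<sigma> \<subseteq> H) (tr w)" by (rule onP_tr[OF fw ow])
        have otwG: "onP (\<lambda>\<sigma>. length \<sigma> = Suc k \<and> Gl \<sigma>) (tr w)" by (rule onP_mono[OF otw]) (use H_sub in auto)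
        show ?thesis unfolding hboundary_def
          using e bar_bd_eq[OF fs_tr[OF fw] otwG] fs_tr[OF fw] otw unfolding hchain_iff by metis
      qed
      define Nf where "Nf = (\<lambda>t v. \<rho> (r (inv\<^bsub>G\<^esub> t)) v - v)"
      define N where "N = (\<lambda>v. \<Sum>t\<in>T. Nf t v)"
      have rt: "t \<in> T \<Longrightarrow> r (inv\<^bsub>G\<^esub> t) \<in> carrier G" for t by (simp add: T_carrier)
      have addNf: "t \<in> T \<Longrightarrow> addv (Nf t)" for t
        by (auto simp: addv_def Nf_def rho_add[OF rt] algebra_simps)
      have nilNf: "t \<in> T \<Longrightarrow> \<exists>m. Nf t ^^ m = (\<lambda>v. 0)" for t
        using assms(6) rt by (simp add: Nf_def)
      have rcomm: "a \<in> carrier G \<Longrightarrow> b \<in> carrier G \<Longrightarrow> \<rho> a (\<rho> b x) = \<rho> b (\<rho> a x)" for a b x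
        using rho_mult_apply[of a b x] rho_mult_apply[of b a x] m_comm[of a b] by simp
      have commNf: "s \<in> T \<Longrightarrow> t \<in> T \<Longrightarrow> Nf s (Nf t x) = Nf t (Nf s x)" for s t x
        by (simp add: Nf_def rho_diff[OF rt] rcomm[OF rt rt, of s t] algebra_simps)
      obtain m where m: "N ^^ m = (\<lambda>v. 0)"
        using nil_sum[of T Nf, OF fin_T addNf nilNf commNf] by (auto simp: N_def)
      have addN: "addv N" using addNf by (auto simp: addv_def N_def sum.distrib)
      have commN: "g \<in> carrier G \<Longrightarrow> N (\<rho> g v) = \<rho> g (N v)" for g v
        by (simp add: N_def Nf_def module_hom.sum[OF mh] rho_diff rcomm[OF rt])
      have addNp: "addv (N ^^ p)" for p by (rule addv_pow[OF addN])
      have commNp: "g \<in> carrier G \<Longrightarrow> (N ^^ p) (\<rho> g v) = \<rho> g ((N ^^ p) v)" for g v p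
        by (induction p) (simp_all add: commN)
      have AN: "A v = N v + (\<Sum>t\<in>T. v)" for v
        by (simp add: A_def N_def Nf_def sum.distrib[symmetric])
      have step: "(N ^^ p) (A v) = (N ^^ Suc p) v + (\<Sum>t\<in>T. (N ^^ p) v)" for p v
        using addNp[of p] by (simp add: AN addv_def addv_sum funpow_Suc_right del: funpow.simps)
      have ind: "j \<le> m \<Longrightarrow> ?B (\<lambda>\<sigma>. (N ^^ (m - j)) (z' \<sigma>))" for j
      proof (induction j)
        case 0 then show ?case using m B0 by simp
      next
        case (Suc j)
        define p where "p = m - Suc j"
        have mj: "m - j = Suc p" using Suc.prems by (simp add: p_def)
        have B1: "?B (\<lambda>\<sigma>. (N ^^ Suc p) (z' \<sigma>))" using Suc mj by simp
        have B2: "?B (\<lambda>\<sigma>. (N ^^ p) (A (z' \<sigma>)))"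
          by (rule cl1[OF BA]) (auto simp: addNp[unfolded addv_def] commNp)
        have "?B ((\<lambda>\<sigma>. (N ^^ p) (A (z' \<sigma>))) - (\<lambda>\<sigma>. (N ^^ Suc p) (z' \<sigma>)))" by (rule cl2[OF B2 B1])
        moreover have "(\<lambda>\<sigma>. (N ^^ p) (A (z' \<sigma>))) - (\<lambda>\<sigma>. (N ^^ Suc p) (z' \<sigma>)) = (\<lambda>\<sigma>. \<Sum>t\<in>T. (N ^^ p) (z' \<sigma>))"
          by (rule ext) (simp add: step del: funpow.simps)
        ultimately have "?B (\<lambda>\<sigma>. \<Sum>t\<in>T. (N ^^ p) (z' \<sigma>))" by simp
        then have "?B (\<lambda>\<sigma>. scale c (\<Sum>t\<in>T. (N ^^ p) (z' \<sigma>)))"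
          by (rule cl1) (simp_all add: sc_add sc_comm)
        then show ?case by (simp add: cn p_def)
      qed
      show "hboundary G \<rho> H k z'" using ind[of m] by simp
    qed
  qed
qed



end
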